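(* Let $V\colon\mathbb{R}\to\mathbb{R}$ be continuous with $\inf_{\mathbb{R}}V>0$ and coercive, i.e. $V(x)\to+\infty$ as $|x|\to+\infty$. Suppose the distributional derivative $V'$ of $V$ is a function satisfying, for some constant $C>0$, \[ |V'(x)|\le C\,V^{3/2}(x)\quad\text{for a.e. }x\in\mathbb{R}. \] Then $H^1_V(\mathbb{R})$ is compactly embedded into $L^\infty(\mathbb{R})$ and into $L^\tau_V(\mathbb{R})$ for all $\tau>2$.
   Context: $H^1_V(\mathbb{R})$ is the completion of $C_0^\infty(\mathbb{R})$ with respect to the norm $\|u\|_V=\left(\int_{\mathbb{R}}(|u'|^2+V(x)|u|^2)\,dx\right)^{1/2}$. $L^\tau_V(\mathbb{R})$ is the space of measurable $u$ with $\int_{\mathbb{R}}V(x)|u|^\tau dx<+\infty$, normed by $\left(\int V|u|^\tau\right)^{1/\tau}$. *)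

theory Defs
  imports "HOL-Analysis.Analysis"
begin

definition test_fun :: "(real \<Rightarrow> real) \<Rightarrow> bool" where
  "test_fun \<phi> \<longleftrightarrow>
     (\<forall>k x. ((deriv ^^ k) \<phi>) differentiable (at x)) \<and>
     compact (closure {x. \<phi> x \<noteq> 0})"

text \<open>The space H^1_V(R), realised as the completion of the test functions w.r.t.
  the norm (int |u'|^2 + V |u|^2)^(1/2): an element is a pair (u, g) (function,
  its derivative) that is the limit, in L^2 x L^2_V, of pairs (phi_n, phi_n')
  with phi_n test functions.  This is the closure of the isometric image of the
  test functions in the complete space L^2 x L^2_V, i.e. the completion.\<close>
definition H1V :: "(real \<Rightarrow> real) \<Rightarrow> ((real \<Rightarrow> real) \<times> (real \<Rightarrow> real)) set" where
  "H1V V = {(u, g). u \<in> borel_measurable lborel \<and> g \<in> borel_measurable lborel \<and>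
     (\<integral>\<^sup>+x. ennreal ((g x)\<^sup>2 + V x * (u x)\<^sup>2) \<partial>lborel) < \<infinity> \<and>
     (\<exists>\<phi>::nat \<Rightarrow> real \<Rightarrow> real. (\<forall>n. test_fun (\<phi> n)) \<and>
        ((\<lambda>n. \<integral>\<^sup>+x. ennreal ((deriv (\<phi> n) x - g x)\<^sup>2 + V x * (\<phi> n x - u x)\<^sup>2) \<partial>lborel)
           \<longlonglongrightarrow> 0))}"

definition H1V_norm :: "(real \<Rightarrow> real) \<Rightarrow> (real \<Rightarrow> real) \<times> (real \<Rightarrow> real) \<Rightarrow> real" where
  "H1V_norm V ug = sqrt (enn2real (\<integral>\<^sup>+x. ennreal ((snd ug x)\<^sup>2 + V x * (fst ug x)\<^sup>2) \<partial>lborel))"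

definition LtauV_int :: "(real \<Rightarrow> real) \<Rightarrow> real \<Rightarrow> (real \<Rightarrow> real) \<Rightarrow> ennreal" where
  "LtauV_int V \<tau> u = (\<integral>\<^sup>+x. ennreal (V x * \<bar>u x\<bar> powr \<tau>) \<partial>lborel)"

text \<open>The map (u,g) |-> u from H^1_V is injective (on a.e.-classes).\<close>
definition H1V_injective :: "(real \<Rightarrow> real) \<Rightarrow> bool" where
  "H1V_injective V \<longleftrightarrow> (\<forall>(u, g) \<in> H1V V. (AE x in lborel. u x = 0) \<longrightarrow> (AE x in lborel. g x = 0))"

definition compact_embed_Linf :: "(real \<Rightarrow> real) \<Rightarrow> bool" where
  "compact_embed_Linf V \<longleftrightarrow>
     H1V_injective V \<and>
     (\<exists>C\<ge>0. \<forall>ug \<in> H1V V. AE x in lborel. \<bar>fst ug x\<bar> \<le> C * H1V_norm V ug) \<and>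
     (\<forall>s::nat \<Rightarrow> (real \<Rightarrow> real) \<times> (real \<Rightarrow> real). \<forall>B.
        (\<forall>n. s n \<in> H1V V \<and> H1V_norm V (s n) \<le> B) \<longrightarrow>
        (\<exists>(r::nat \<Rightarrow> nat) w. strict_mono r \<and> w \<in> borel_measurable lborel \<and>
           (\<exists>M. AE x in lborel. \<bar>w x\<bar> \<le> M) \<and>
           (\<forall>\<epsilon>::real>0. \<exists>N. \<forall>k\<ge>N. AE x in lborel. \<bar>fst (s (r k)) x - w x\<bar> \<le> \<epsilon>)))"

definition compact_embed_LtauV :: "(real \<Rightarrow> real) \<Rightarrow> real \<Rightarrow> bool" where
  "compact_embed_LtauV V \<tau> \<longleftrightarrow>
     H1V_injective V \<and>
     (\<exists>C\<ge>0. \<forall>ug \<in> H1V V. LtauV_int V \<tau> (fst ug) \<le> ennreal ((C * H1V_norm V ug) powr \<tau>)) \<and>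
     (\<forall>s::nat \<Rightarrow> (real \<Rightarrow> real) \<times> (real \<Rightarrow> real). \<forall>B.
        (\<forall>n. s n \<in> H1V V \<and> H1V_norm V (s n) \<le> B) \<longrightarrow>
        (\<exists>(r::nat \<Rightarrow> nat) w. strict_mono r \<and> w \<in> borel_measurable lborel \<and>
           LtauV_int V \<tau> w < \<infinity> \<and>
           (\<lambda>k. LtauV_int V \<tau> (\<lambda>x. fst (s (r k)) x - w x)) \<longlonglongrightarrow> 0))"

end

theory Submission
  imports Defs "HOL-Complex_Analysis.Great_Picard"
begin


definition c1c :: "(real \<Rightarrow> real) \<Rightarrow> real \<Rightarrow> bool" where
 "c1c f L \<longleftrightarrow> (\<forall>x. (f has_real_derivative deriv f x) (at x)) \<and> continuous_on UNIV (deriv f) \<and>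
    (\<forall>x. L < \<bar>x\<bar> \<longrightarrow> f x = 0 \<and> deriv f x = 0)"

lemma deriv_zero_outside:
  fixes f :: "real \<Rightarrow> real" and x :: real
  assumes "\<And>x. L < \<bar>x\<bar> \<Longrightarrow> f x = 0" "L < \<bar>x\<bar>"
  shows "deriv f x = 0"
proof -
  have "((\<lambda>_. 0::real) has_real_derivative 0) (at x)" by simp
  have op: "open {x::real. L < \<bar>x\<bar>}" by (intro open_Collect_less continuous_intros)
  from \<open>((\<lambda>_. 0::real) has_real_derivative 0) (at x)\<close> have "(f has_real_derivative 0) (at x)"
    by (rule has_field_derivative_transform_within_open[where S="{x. L < \<bar>x\<bar>}"])
       (use assms op in auto)
  then show ?thesis by (rule DERIV_imp_deriv)
qed

lemma test_fun_c1c: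
  assumes "test_fun \<phi>"
  shows "\<exists>L. c1c \<phi> L \<and> c1c (deriv \<phi>) L"
proof -
  have d0: "\<phi> differentiable (at x)" for x using assms unfolding test_fun_def
    by (metis funpow_0)
  have d1: "deriv \<phi> differentiable (at x)" for x using assms unfolding test_fun_def
    by (metis funpow_0 funpow.simps(2) o_apply One_nat_def)
  have d2: "deriv (deriv \<phi>) differentiable (at x)" for x using assms unfolding test_fun_def
    by (metis funpow_0 funpow.simps(2) o_apply numeral_2_eq_2 One_nat_def)
  have "bounded (closure {x. \<phi> x \<noteq> 0})" using assms unfolding test_fun_def
    by (simp add: compact_imp_bounded)
  then have "bounded {x. \<phi> x \<noteq> 0}" by (rule bounded_subset) (rule closure_subset)
  then obtain L where L: "\<And>x. \<phi> x \<noteq> 0 \<Longrightarrow> \<bar>x\<bar> \<le> L"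
    unfolding bounded_iff by auto
  have z0: "\<phi> x = 0" if "L < \<bar>x\<bar>" for x using L that by force
  have z1: "deriv \<phi> x = 0" if "L < \<bar>x\<bar>" for x using deriv_zero_outside z0 that by blast
  have z2: "deriv (deriv \<phi>) x = 0" if "L < \<bar>x\<bar>" for x using deriv_zero_outside z1 that by blast
  have c1: "continuous_on UNIV (deriv \<phi>)"
    using d1 by (simp add: continuous_at_imp_continuous_on differentiable_imp_continuous_within)
  have c2: "continuous_on UNIV (deriv (deriv \<phi>))"
    using d2 by (simp add: continuous_at_imp_continuous_on differentiable_imp_continuous_within)
  show ?thesis unfolding c1c_def
    using d0 d1 c1 c2 z0 z1 z2 by (intro exI[of _ L]) (auto simp: DERIV_deriv_iff_real_differentiable)
qed

lemma c1c_cont: "c1c f L \<Longrightarrow> continuous_on UNIV f"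
  unfolding c1c_def by (meson DERIV_isCont continuous_at_imp_continuous_on)

lemma c1c_diff:
  assumes "c1c f L1" "c1c h L2"
  shows "c1c (\<lambda>x. f x - h x) (max L1 L2)" "deriv (\<lambda>x. f x - h x) = (\<lambda>x. deriv f x - deriv h x)"
proof -
  have D: "((\<lambda>x. f x - h x) has_real_derivative deriv f x - deriv h x) (at x)" for x
    using assms unfolding c1c_def by (auto intro!: derivative_eq_intros)
  then show dd: "deriv (\<lambda>x. f x - h x) = (\<lambda>x. deriv f x - deriv h x)"
    by (auto intro!: DERIV_imp_deriv)
  show "c1c (\<lambda>x. f x - h x) (max L1 L2)"
    using assms D unfolding c1c_def dd by (auto intro!: continuous_intros)
qed

lemma c1c_FTC1:
  assumes "c1c f L" "a \<le> b"
  shows "integral {a..b} (deriv f) = f b - f a"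
proof -
  have "(deriv f has_integral (f b - f a)) {a..b}"
    using assms unfolding c1c_def
    by (intro fundamental_theorem_of_calculus)
       (auto simp: has_real_derivative_iff_has_vector_derivative[symmetric] intro: has_field_derivative_at_within)
  then show ?thesis by (rule integral_unique)
qed

lemma c1c_FTC2:
  assumes "c1c f L" "a \<le> b"
  shows "integral {a..b} (\<lambda>t. 2 * f t * deriv f t) = (f b)\<^sup>2 - (f a)\<^sup>2"
proof -
  have d: "((\<lambda>t. (f t)\<^sup>2) has_real_derivative 2 * f t * deriv f t) (at t)" for t
    using assms unfolding c1c_def by (auto intro!: derivative_eq_intros)
  have "((\<lambda>t. 2 * f t * deriv f t) has_integral ((f b)\<^sup>2 - (f a)\<^sup>2)) {a..b}"
    using assms d
    by (intro fundamental_theorem_of_calculus)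
       (auto simp: has_real_derivative_iff_has_vector_derivative[symmetric] intro: has_field_derivative_at_within)
  then show ?thesis by (rule integral_unique)
qed

lemma nn_interval_eq:
  fixes h :: "real \<Rightarrow> real"
  assumes "continuous_on UNIV h" "\<And>x. 0 \<le> h x" "\<And>x. x \<notin> {a..b} \<Longrightarrow> h x = 0"
  shows "(\<integral>\<^sup>+x. ennreal (h x) \<partial>lborel) = ennreal (integral {a..b} h)"
proof -
  have "(h has_integral (integral {a..b} h)) {a..b}"
    using assms by (intro integrable_integral integrable_continuous_interval) (auto intro: continuous_on_subset)
  then have "(\<integral>\<^sup>+x. ennreal (h x) * indicator {a..b} x \<partial>lborel) = ennreal (integral {a..b} h)"
    using assms by (intro nn_integral_has_integral_lebesgue') auto
  moreover have "(\<lambda>x. ennreal (h x) * indicator {a..b} x) = (\<lambda>x. ennreal (h x))"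
    using assms by (auto simp: indicator_def fun_eq_iff)
  ultimately show ?thesis by simp
qed

lemma nn_interval_le:
  fixes h :: "real \<Rightarrow> real"
  assumes "continuous_on UNIV h" "\<And>x. 0 \<le> h x"
  shows "ennreal (integral {a..b} h) \<le> (\<integral>\<^sup>+x. ennreal (h x) \<partial>lborel)"
proof -
  have "(h has_integral (integral {a..b} h)) {a..b}"
    using assms by (intro integrable_integral integrable_continuous_interval) (auto intro: continuous_on_subset)
  then have "(\<integral>\<^sup>+x. ennreal (h x) * indicator {a..b} x \<partial>lborel) = ennreal (integral {a..b} h)"
    using assms by (intro nn_integral_has_integral_lebesgue') auto
  moreover have "(\<integral>\<^sup>+x. ennreal (h x) * indicator {a..b} x \<partial>lborel) \<le> (\<integral>\<^sup>+x. ennreal (h x) \<partial>lborel)"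
    by (intro nn_integral_mono) (auto simp: indicator_def)
  ultimately show ?thesis by simp
qed

lemma lim_ennreal_bound:
  fixes X :: "nat \<Rightarrow> real" and e :: "nat \<Rightarrow> ennreal"
  assumes X: "X \<longlonglongrightarrow> l" and e: "e \<longlonglongrightarrow> 0" and le: "\<And>n. ennreal (X n) \<le> 2 * e n + Z"
  shows "ennreal l \<le> Z"
proof (rule ennreal_le_epsilon)
  fix d :: real assume Z: "Z < top" and d: "0 < d"
  obtain z where z: "Z = ennreal z" "0 \<le> z" using Z by (cases Z rule: ennreal_cases) auto
  have "eventually (\<lambda>n. e n < ennreal (d/2)) sequentially"
    using e d by (intro order_tendstoD(2)) auto
  then have ev: "eventually (\<lambda>n. X n \<le> z + d) sequentially"
  proof eventually_elim
    case (elim n)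
    have "ennreal (X n) \<le> 2 * ennreal (d/2) + ennreal z"
    proof -
      have "2 * e n \<le> 2 * ennreal (d/2)" using elim by (intro mult_left_mono) auto
      then show ?thesis using le[of n] z by (metis add_right_mono order_trans)
    qed
    also have "\<dots> = ennreal (z + d)"
    proof -
      have "ennreal d = ennreal (2 * (d/2))" by simp
      also have "\<dots> = ennreal 2 * ennreal (d/2)" using d by (intro ennreal_mult) auto
      finally have "2 * ennreal (d/2) = ennreal d" by simp
      moreover have "ennreal (z + d) = ennreal z + ennreal d" using z d by (intro ennreal_plus) auto
      ultimately show ?thesis by (simp add: add.commute)
    qed
    finally show ?case using z d by (subst (asm) ennreal_le_iff) auto
  qed
  have "l \<le> z + d" using X ev by (rule tendsto_upperbound) simp
  then have "ennreal l \<le> ennreal (z + d)" by (rule ennreal_leI)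
  then show "ennreal l \<le> Z + ennreal d" using z d by (simp add: ennreal_plus)
qed

lemma unif_cauchy_aux:
  fixes e :: "nat \<Rightarrow> ennreal" and \<phi> :: "nat \<Rightarrow> real \<Rightarrow> real"
  assumes e0: "e \<longlonglongrightarrow> 0" and cpos: "0 < c"
    and bnd: "\<And>m n x. ennreal (c * (\<phi> m x - \<phi> n x)\<^sup>2) \<le> 2 * e m + 2 * e n"
  shows "\<forall>\<epsilon>>0. \<exists>K. \<forall>m n x. K \<le> m \<and> K \<le> n \<and> True \<longrightarrow> dist (\<phi> m x) (\<phi> n x) < \<epsilon>"
proof (intro allI impI)
  fix \<epsilon> :: real assume \<epsilon>: "0 < \<epsilon>"
  define \<delta> where "\<delta> = c * \<epsilon>\<^sup>2 / 8"
  have \<delta>: "0 < \<delta>" unfolding \<delta>_def using cpos \<epsilon> by simp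
  have "eventually (\<lambda>n. e n < ennreal \<delta>) sequentially"
    using e0 \<delta> by (intro order_tendstoD(2)) auto
  then obtain K where K: "\<And>n. K \<le> n \<Longrightarrow> e n < ennreal \<delta>" unfolding eventually_sequentially by blast
  have "dist (\<phi> m x) (\<phi> n x) < \<epsilon>" if "K \<le> m" "K \<le> n" for m n x
  proof -
    have "2 * e m \<le> 2 * ennreal \<delta>" using K[OF that(1)] by (intro mult_left_mono) auto
    moreover have "2 * e n \<le> 2 * ennreal \<delta>" using K[OF that(2)] by (intro mult_left_mono) auto
    ultimately have "2 * e m + 2 * e n \<le> 2 * ennreal \<delta> + 2 * ennreal \<delta>" by (rule add_mono)
    also have "\<dots> = ennreal (4 * \<delta>)"
    proof -
      have "ennreal (4 * \<delta>) = ennreal 4 * ennreal \<delta>" using \<delta> by (intro ennreal_mult) auto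
      moreover have "(2::ennreal) * ennreal \<delta> + 2 * ennreal \<delta> = (2 + 2) * ennreal \<delta>"
        by (rule distrib_right[symmetric])
      ultimately show ?thesis by simp
    qed
    finally have "ennreal (c * (\<phi> m x - \<phi> n x)\<^sup>2) \<le> ennreal (4 * \<delta>)" by (rule order_trans[OF bnd])
    then have "c * (\<phi> m x - \<phi> n x)\<^sup>2 \<le> 4 * \<delta>" using \<delta> by (subst (asm) ennreal_le_iff) auto
    then have "c * (\<phi> m x - \<phi> n x)\<^sup>2 \<le> c * (\<epsilon>\<^sup>2 / 2)" unfolding \<delta>_def by simp
    then have "(\<phi> m x - \<phi> n x)\<^sup>2 \<le> \<epsilon>\<^sup>2 / 2" using cpos by (rule mult_left_le_imp_le)
    also have "\<dots> < \<epsilon>\<^sup>2" using \<epsilon> by simp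
    finally have "\<bar>\<phi> m x - \<phi> n x\<bar>\<^sup>2 < \<epsilon>\<^sup>2" by simp
    then have "\<bar>\<phi> m x - \<phi> n x\<bar> < \<epsilon>" by (rule power2_less_imp_less) (use \<epsilon> in auto)
    then show ?thesis by (simp add: dist_real_def)
  qed
  then show "\<exists>K. \<forall>m n x. K \<le> m \<and> K \<le> n \<and> True \<longrightarrow> dist (\<phi> m x) (\<phi> n x) < \<epsilon>" by blast
qed

lemma ennreal_2ab: "0 \<le> a \<Longrightarrow> 0 \<le> b \<Longrightarrow> 2 * ennreal a + ennreal b = ennreal (2 * a + b)"
proof -
  assume a: "0 \<le> a" and b: "0 \<le> b"
  have "ennreal (2 * a + b) = ennreal (2 * a) + ennreal b" using a b by (intro ennreal_plus) auto
  moreover have "ennreal (2 * a) = ennreal 2 * ennreal a" using a by (intro ennreal_mult) auto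
  ultimately show ?thesis by simp
qed

lemma compact_seq:
  fixes F :: "nat \<Rightarrow> real \<Rightarrow> real"
  assumes bnd: "\<And>n x. \<bar>F n x\<bar> \<le> M"
    and equi: "\<And>e. 0 < e \<Longrightarrow> \<exists>d>0. \<forall>n x y. \<bar>x - y\<bar> < d \<longrightarrow> \<bar>F n x - F n y\<bar> < e"
    and tail: "\<And>\<epsilon>. 0 < \<epsilon> \<Longrightarrow> \<exists>R. \<forall>n x. R \<le> \<bar>x\<bar> \<longrightarrow> \<bar>F n x\<bar> \<le> \<epsilon>"
    and cont: "\<And>n. continuous_on UNIV (F n)"
  shows "\<exists>(r::nat \<Rightarrow> nat) w. strict_mono r \<and> continuous_on UNIV w \<and> (\<forall>x. \<bar>w x\<bar> \<le> M) \<and>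
           (\<forall>\<epsilon>>0. \<exists>N. \<forall>k\<ge>N. \<forall>x. \<bar>F (r k) x - w x\<bar> < \<epsilon>)"
proof -
  define P where "P = (\<lambda>(i::nat) (r::nat \<Rightarrow> nat). \<exists>g. \<forall>e>0. \<exists>N. \<forall>n x. N \<le> n \<and> x \<in> {- real i..real i} \<longrightarrow> \<bar>F (r n) x - g x\<bar> < e)"
  obtain k where k: "strict_mono (k :: nat \<Rightarrow> nat)" "\<And>i. P i (id \<circ> k)"
  proof (rule subsequence_diagonalization_lemma[of P id])
    fix i :: nat and r :: "nat \<Rightarrow> nat"
    have "compact {- real i..real i}" by simp
    then obtain g kk where kk: "strict_mono (kk :: nat \<Rightarrow> nat)"
      "\<And>e. 0 < e \<Longrightarrow> \<exists>N. \<forall>n x. n \<ge> N \<and> x \<in> {- real i..real i} \<longrightarrow> norm ((\<lambda>n. F (r n)) (kk n) x - g x) < e"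
    proof (rule Arzela_Ascoli[of "{- real i..real i}" "\<lambda>n. F (r n)" M])
      show "norm (F (r n) x) \<le> M" for n x using bnd by simp
      fix x e assume "x \<in> {- real i..real i}" "0 < (e::real)"
      then obtain d where "d > 0" "\<forall>n x y. \<bar>x - y\<bar> < d \<longrightarrow> \<bar>F n x - F n y\<bar> < e" using equi by blast
      then show "\<exists>d>0. \<forall>n y. y \<in> {- real i..real i} \<and> norm (x - y) < d \<longrightarrow> norm (F (r n) x - F (r n) y) < e"
        by (auto simp: real_norm_def)
    qed blast
    then show "\<exists>kk. strict_mono (kk :: nat \<Rightarrow> nat) \<and> P i (r \<circ> kk)"
      unfolding P_def by (intro exI[of _ kk] conjI) (auto simp: real_norm_def)
  next
    fix i :: nat and r k1 k2 :: "nat \<Rightarrow> nat" and N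
    assume P1: "P i (r \<circ> k1)" and sub: "\<And>j. N \<le> j \<Longrightarrow> \<exists>j'. j \<le> j' \<and> k2 j = k1 j'"
    from P1 obtain g where g: "\<forall>e>0. \<exists>N. \<forall>n x. N \<le> n \<and> x \<in> {- real i..real i} \<longrightarrow> \<bar>F (r (k1 n)) x - g x\<bar> < e"
      unfolding P_def by auto
    have "\<exists>N'. \<forall>n x. N' \<le> n \<and> x \<in> {- real i..real i} \<longrightarrow> \<bar>F (r (k2 n)) x - g x\<bar> < e" if e0: "0 < e" for e
    proof -
      obtain N0 where N0: "\<forall>n x. N0 \<le> n \<and> x \<in> {- real i..real i} \<longrightarrow> \<bar>F (r (k1 n)) x - g x\<bar> < e"
        using g e0 by blast
      show ?thesis
      proof (intro exI[of _ "max N N0"] allI impI)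
        fix n x assume a: "max N N0 \<le> n \<and> x \<in> {- real i..real i}"
        then obtain j' where "n \<le> j'" "k2 n = k1 j'" using sub[of n] by auto
        then show "\<bar>F (r (k2 n)) x - g x\<bar> < e" using N0 a by auto
      qed
    qed
    then show "P i (r \<circ> k2)" unfolding P_def by auto
  qed (blast intro: that)
  define G where "G n = F (k n)" for n
  have cauchy: "\<forall>e>0. \<exists>N. \<forall>m n x. N \<le> m \<and> N \<le> n \<and> True \<longrightarrow> dist (G m x) (G n x) < e"
  proof (intro allI impI)
    fix e :: real assume e: "0 < e"
    obtain R where R: "\<And>n x. R \<le> \<bar>x\<bar> \<Longrightarrow> \<bar>F n x\<bar> \<le> e/3" using tail[of "e/3"] e by auto
    define i where "i = nat \<lceil>R\<rceil>"
    have iR: "R \<le> real i" unfolding i_def by linarith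
    obtain g where g: "\<forall>e>0. \<exists>N. \<forall>n x. N \<le> n \<and> x \<in> {- real i..real i} \<longrightarrow> \<bar>F (k n) x - g x\<bar> < e"
      using k(2)[of i] unfolding P_def by auto
    obtain N where N: "\<And>n x. N \<le> n \<Longrightarrow> x \<in> {- real i..real i} \<Longrightarrow> \<bar>F (k n) x - g x\<bar> < e/3"
      using g e by (meson zero_less_divide_iff zero_less_numeral)
    have "dist (G m x) (G n x) < e" if "N \<le> m" "N \<le> n" for m n x
    proof (cases "x \<in> {- real i..real i}")
      case True
      then show ?thesis using N[OF that(1) True] N[OF that(2) True] e unfolding G_def dist_real_def by linarith
    next
      case False
      then have "R \<le> \<bar>x\<bar>" using iR by auto
      then show ?thesis using R[where n="k m" and x=x] R[where n="k n" and x=x] e unfolding G_def dist_real_def by linarith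
    qed
    then show "\<exists>N. \<forall>m n x. N \<le> m \<and> N \<le> n \<and> True \<longrightarrow> dist (G m x) (G n x) < e" by blast
  qed
  then obtain w where w: "\<forall>e>0. \<exists>N. \<forall>n x. N \<le> n \<and> True \<longrightarrow> dist (G n x) (w x) < e"
    using uniformly_convergent_eq_cauchy[of "\<lambda>_. True" G] by blast
  have unif: "\<forall>\<epsilon>>0. \<exists>N. \<forall>n\<ge>N. \<forall>x. \<bar>F (k n) x - w x\<bar> < \<epsilon>"
    using w unfolding G_def dist_real_def by simp
  have pt: "(\<lambda>n. G n x) \<longlonglongrightarrow> w x" for x
  proof (rule LIMSEQ_I)
    fix r :: real assume "0 < r"
    then obtain N where "\<forall>n\<ge>N. \<forall>x. \<bar>F (k n) x - w x\<bar> < r" using unif by blast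
    then show "\<exists>no. \<forall>n\<ge>no. norm (G n x - w x) < r" unfolding G_def by auto
  qed
  have wc: "continuous_on UNIV w"
  proof (rule uniform_limit_theorem)
    show "\<forall>\<^sub>F n in sequentially. continuous_on UNIV (G n)" unfolding G_def using cont by simp
    show "uniform_limit UNIV G w sequentially"
      unfolding uniform_limit_sequentially_iff
    proof (intro allI impI)
      fix \<epsilon> :: real assume "0 < \<epsilon>"
      then obtain N where "\<forall>n\<ge>N. \<forall>x. \<bar>F (k n) x - w x\<bar> < \<epsilon>" using unif by blast
      then show "\<exists>N. \<forall>n\<ge>N. \<forall>x\<in>UNIV. dist (G n x) (w x) < \<epsilon>" by (auto simp: dist_real_def G_def)
    qed
  qed simp
  have wb: "\<bar>w x\<bar> \<le> M" for x
  proof -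
    have "(\<lambda>n. \<bar>G n x\<bar>) \<longlonglongrightarrow> \<bar>w x\<bar>" by (intro tendsto_intros pt)
    then show ?thesis by (rule tendsto_upperbound) (auto simp: G_def bnd)
  qed
  have "strict_mono k \<and> continuous_on UNIV w \<and> (\<forall>x. \<bar>w x\<bar> \<le> M) \<and> (\<forall>\<epsilon>>0. \<exists>N. \<forall>n\<ge>N. \<forall>x. \<bar>F (k n) x - w x\<bar> < \<epsilon>)"
    using k(1) wc wb unif by blast
  then show ?thesis by blast
qed


locale Vctx =
  fixes V :: "real \<Rightarrow> real" and v0 :: real
  assumes Vc: "continuous_on UNIV V" and Vge: "\<And>x. v0 \<le> V x" and v0: "0 < v0"
begin

definition en :: "(real \<Rightarrow> real) \<Rightarrow> ennreal" where
  "en f = (\<integral>\<^sup>+x. ennreal ((deriv f x)\<^sup>2 + V x * (f x)\<^sup>2) \<partial>lborel)"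

lemma en_eq:
  assumes "c1c f L" "a \<le> -\<bar>L\<bar>" "\<bar>L\<bar> \<le> b"
  shows "en f = ennreal (integral {a..b} (\<lambda>x. (deriv f x)\<^sup>2 + V x * (f x)\<^sup>2))"
  unfolding en_def
proof (rule nn_interval_eq)
  show "continuous_on UNIV (\<lambda>x. (deriv f x)\<^sup>2 + V x * (f x)\<^sup>2)"
    using assms(1) c1c_cont[OF assms(1)] Vc unfolding c1c_def by (auto intro!: continuous_intros)
  show "0 \<le> (deriv f x)\<^sup>2 + V x * (f x)\<^sup>2" for x
    using Vge[of x] v0 by (intro add_nonneg_nonneg mult_nonneg_nonneg) auto
  show "(deriv f x)\<^sup>2 + V x * (f x)\<^sup>2 = 0" if "x \<notin> {a..b}" for x
    using assms that unfolding c1c_def by auto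
qed

lemma en_integrand_cont:
  assumes "c1c f L"
  shows "continuous_on UNIV (\<lambda>x. (deriv f x)\<^sup>2 + V x * (f x)\<^sup>2)"
  using assms c1c_cont[OF assms] Vc unfolding c1c_def by (auto intro!: continuous_intros)

lemma en_integrand_nonneg: "0 \<le> (deriv f x)\<^sup>2 + V x * (f x)\<^sup>2"
  using Vge[of x] v0 by (intro add_nonneg_nonneg mult_nonneg_nonneg) auto

lemma en_sub_le:
  assumes "c1c f L" "x \<le> y"
  shows "ennreal (integral {x..y} (\<lambda>t. (deriv f t)\<^sup>2 + V t * (f t)\<^sup>2)) \<le> en f"
  unfolding en_def using en_integrand_cont[OF assms(1)] en_integrand_nonneg
  by (intro nn_interval_le) auto

lemma est_sup:
  assumes "c1c f L"
  shows "ennreal (min 1 v0 * (f x)\<^sup>2) \<le> en f"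
proof (cases "\<bar>L\<bar> < \<bar>x\<bar>")
  case True
  then have "f x = 0" using assms unfolding c1c_def by auto
  then show ?thesis by simp
next
  case False
  define a where "a = - \<bar>L\<bar> - 1"
  have ax: "a \<le> x" using False unfolding a_def by auto
  have fa: "f a = 0" using assms unfolding c1c_def a_def by auto
  let ?h = "\<lambda>t. (deriv f t)\<^sup>2 + V t * (f t)\<^sup>2"
  have ic: "continuous_on {a..x} g" if "continuous_on UNIV g" for g :: "real \<Rightarrow> real"
    using that by (rule continuous_on_subset) auto
  have cf: "continuous_on UNIV f" "continuous_on UNIV (deriv f)"
    using assms c1c_cont unfolding c1c_def by auto
  have "min 1 v0 * (f x)\<^sup>2 = integral {a..x} (\<lambda>t. min 1 v0 * (2 * f t * deriv f t))"
    using c1c_FTC2[OF assms ax] fa by simp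
  also have "\<dots> \<le> integral {a..x} ?h"
  proof (rule integral_le)
    show "(\<lambda>t. min 1 v0 * (2 * f t * deriv f t)) integrable_on {a..x}"
      by (intro integrable_continuous_interval ic continuous_intros cf)
    show "?h integrable_on {a..x}"
      by (intro integrable_continuous_interval ic en_integrand_cont[OF assms])
    fix t
    have "2 * f t * deriv f t \<le> (f t)\<^sup>2 + (deriv f t)\<^sup>2"
      using sum_squares_ge_zero[of "f t - deriv f t" 0] by (simp add: power2_eq_square algebra_simps)
    then have "min 1 v0 * (2 * f t * deriv f t) \<le> min 1 v0 * ((f t)\<^sup>2 + (deriv f t)\<^sup>2)"
      using v0 by (intro mult_left_mono) auto
    also have "\<dots> \<le> (deriv f t)\<^sup>2 + V t * (f t)\<^sup>2"
    proof -
      have "min 1 v0 * (f t)\<^sup>2 \<le> V t * (f t)\<^sup>2"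
        using Vge[of t] by (intro mult_right_mono) auto
      moreover have "min 1 v0 * (deriv f t)\<^sup>2 \<le> (deriv f t)\<^sup>2"
        using v0 by (intro mult_left_le_one_le) auto
      ultimately show ?thesis by (simp add: algebra_simps)
    qed
    finally show "min 1 v0 * (2 * f t * deriv f t) \<le> ?h t" .
  qed
  finally have "ennreal (min 1 v0 * (f x)\<^sup>2) \<le> ennreal (integral {a..x} ?h)"
    by (rule ennreal_leI)
  also have "\<dots> \<le> en f" by (rule en_sub_le[OF assms ax])
  finally show ?thesis .
qed


lemma est_tail:
  assumes f: "c1c f L" and M: "0 < M" and MV: "\<And>t. \<bar>x\<bar> \<le> \<bar>t\<bar> \<Longrightarrow> M \<le> V t"
  shows "ennreal (sqrt M * (f x)\<^sup>2) \<le> en f"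
proof (cases "\<bar>L\<bar> < \<bar>x\<bar>")
  case True
  then have "f x = 0" using f unfolding c1c_def by auto
  then show ?thesis by simp
next
  case False
  let ?h = "\<lambda>t. (deriv f t)\<^sup>2 + V t * (f t)\<^sup>2"
  have cf: "continuous_on UNIV f" "continuous_on UNIV (deriv f)"
    using f c1c_cont unfolding c1c_def by auto
  have sM: "(sqrt M)\<^sup>2 = M" using M by simp
  have key: "sqrt M * (\<sigma> * (2 * f t * deriv f t)) \<le> ?h t" if "M \<le> V t" "\<sigma> = 1 \<or> \<sigma> = -1" for t \<sigma>
  proof -
    have "0 \<le> (sqrt M * f t - \<sigma> * deriv f t)\<^sup>2" by simp
    also have "(sqrt M * f t - \<sigma> * deriv f t)\<^sup>2 = (sqrt M)\<^sup>2 * (f t)\<^sup>2 + \<sigma>\<^sup>2 * (deriv f t)\<^sup>2 - sqrt M * (\<sigma> * (2 * f t * deriv f t))"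
      by (simp add: power2_diff power_mult_distrib algebra_simps del: real_sqrt_pow2)
    finally have "sqrt M * (\<sigma> * (2 * f t * deriv f t)) \<le> (sqrt M)\<^sup>2 * (f t)\<^sup>2 + \<sigma>\<^sup>2 * (deriv f t)\<^sup>2"
      by simp
    also have "\<dots> \<le> V t * (f t)\<^sup>2 + (deriv f t)\<^sup>2"
      using that sM by (auto intro!: mult_right_mono)
    finally show ?thesis by simp
  qed
  show ?thesis
  proof (cases "0 \<le> x")
    case True
    define b where "b = \<bar>L\<bar> + 1"
    have xb: "x \<le> b" using False unfolding b_def by auto
    have fb: "f b = 0" using f unfolding c1c_def b_def by auto
    have ic: "continuous_on {x..b} g" if "continuous_on UNIV g" for g :: "real \<Rightarrow> real"
      using that by (rule continuous_on_subset) auto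
    have "sqrt M * (f x)\<^sup>2 = integral {x..b} (\<lambda>t. sqrt M * (-1 * (2 * f t * deriv f t)))"
      using c1c_FTC2[OF f xb] fb by simp
    also have "\<dots> \<le> integral {x..b} ?h"
    proof (rule integral_le)
      show "(\<lambda>t. sqrt M * (-1 * (2 * f t * deriv f t))) integrable_on {x..b}"
        by (intro integrable_continuous_interval ic continuous_intros cf)
      show "?h integrable_on {x..b}"
        by (intro integrable_continuous_interval ic en_integrand_cont[OF f])
      fix t assume "t \<in> {x..b}"
      then have "M \<le> V t" using True by (intro MV) auto
      then show "sqrt M * (-1 * (2 * f t * deriv f t)) \<le> ?h t" by (intro key) auto
    qed
    finally have "ennreal (sqrt M * (f x)\<^sup>2) \<le> ennreal (integral {x..b} ?h)"
      by (rule ennreal_leI)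
    also have "\<dots> \<le> en f" by (rule en_sub_le[OF f xb])
    finally show ?thesis .
  next
    case False2: False
    define a where "a = - \<bar>L\<bar> - 1"
    have ax: "a \<le> x" using False unfolding a_def by auto
    have fa: "f a = 0" using f unfolding c1c_def a_def by auto
    have ic: "continuous_on {a..x} g" if "continuous_on UNIV g" for g :: "real \<Rightarrow> real"
      using that by (rule continuous_on_subset) auto
    have "sqrt M * (f x)\<^sup>2 = integral {a..x} (\<lambda>t. sqrt M * (1 * (2 * f t * deriv f t)))"
      using c1c_FTC2[OF f ax] fa by simp
    also have "\<dots> \<le> integral {a..x} ?h"
    proof (rule integral_le)
      show "(\<lambda>t. sqrt M * (1 * (2 * f t * deriv f t))) integrable_on {a..x}"
        by (intro integrable_continuous_interval ic continuous_intros cf)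
      show "?h integrable_on {a..x}"
        by (intro integrable_continuous_interval ic en_integrand_cont[OF f])
      fix t assume "t \<in> {a..x}"
      then have "M \<le> V t" using False2 by (intro MV) auto
      then show "sqrt M * (1 * (2 * f t * deriv f t)) \<le> ?h t" by (intro key) auto
    qed
    finally have "ennreal (sqrt M * (f x)\<^sup>2) \<le> ennreal (integral {a..x} ?h)"
      by (rule ennreal_leI)
    also have "\<dots> \<le> en f" by (rule en_sub_le[OF f ax])
    finally show ?thesis .
  qed
qed

lemma est_equi:
  assumes f: "c1c f L" and s: "0 < s" and xy: "x \<le> y"
  shows "ennreal (s * \<bar>f y - f x\<bar> - s\<^sup>2 * (y - x)) \<le> en f"
proof -
  let ?h = "\<lambda>t. (deriv f t)\<^sup>2 + V t * (f t)\<^sup>2"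
  have cf: "continuous_on UNIV f" "continuous_on UNIV (deriv f)"
    using f c1c_cont unfolding c1c_def by auto
  have ic: "continuous_on {x..y} g" if "continuous_on UNIV g" for g :: "real \<Rightarrow> real"
    using that by (rule continuous_on_subset) auto
  have i1: "deriv f integrable_on {x..y}" by (intro integrable_continuous_interval ic cf)
  have "s * \<bar>f y - f x\<bar> = \<bar>integral {x..y} (\<lambda>t. s * deriv f t)\<bar>"
    using c1c_FTC1[OF f xy] s by (simp add: abs_mult)
  also have "\<dots> \<le> integral {x..y} (\<lambda>t. s\<^sup>2 + ?h t)"
  proof (rule integral_norm_bound_integral[where 'a=real, unfolded real_norm_def])
    show "(\<lambda>t. s * deriv f t) integrable_on {x..y}"
      by (intro integrable_continuous_interval ic continuous_intros cf)
    show "(\<lambda>t. s\<^sup>2 + ?h t) integrable_on {x..y}"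
      by (intro integrable_continuous_interval ic continuous_intros en_integrand_cont[OF f])
    fix t assume "t \<in> {x..y}"
    have "\<bar>s * deriv f t\<bar> \<le> s\<^sup>2 + (deriv f t)\<^sup>2"
    proof -
      have "0 \<le> (s - \<bar>deriv f t\<bar>)\<^sup>2" by simp
      then have "2 * (s * \<bar>deriv f t\<bar>) \<le> s\<^sup>2 + (deriv f t)\<^sup>2"
        by (simp add: power2_eq_square algebra_simps)
      moreover have "0 \<le> s * \<bar>deriv f t\<bar>" using s by simp
      ultimately show ?thesis using s by (simp add: abs_mult)
        (smt (verit, best) zero_le_power2)
    qed
    also have "\<dots> \<le> s\<^sup>2 + ?h t" using en_integrand_nonneg[of f t] Vge[of t] v0
      by (simp add: add_increasing2)
    finally show "\<bar>s * deriv f t\<bar> \<le> s\<^sup>2 + ?h t" .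
  qed
  also have "\<dots> = s\<^sup>2 * (y - x) + integral {x..y} ?h"
    using xy by (subst integral_add) (auto intro!: integrable_continuous_interval ic en_integrand_cont[OF f])
  finally have "s * \<bar>f y - f x\<bar> - s\<^sup>2 * (y - x) \<le> integral {x..y} ?h" by simp
  then have "ennreal (s * \<bar>f y - f x\<bar> - s\<^sup>2 * (y - x)) \<le> ennreal (integral {x..y} ?h)"
    by (rule ennreal_leI)
  also have "\<dots> \<le> en f" by (rule en_sub_le[OF f xy])
  finally show ?thesis .
qed


lemma sq_ineq: "(a - b)\<^sup>2 \<le> 2 * (a - c)\<^sup>2 + 2 * (b - c)\<^sup>2" for a b c :: real
proof -
  have "0 \<le> ((a - c) + (b - c))\<^sup>2" by simp
  then show ?thesis by (simp add: power2_eq_square algebra_simps)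
qed

lemma nn_2sum:
  fixes A B X :: "real \<Rightarrow> real"
  assumes "A \<in> borel_measurable lborel" "B \<in> borel_measurable lborel"
    "\<And>x. 0 \<le> A x" "\<And>x. 0 \<le> B x" "\<And>x. X x \<le> 2 * A x + 2 * B x"
  shows "(\<integral>\<^sup>+x. ennreal (X x) \<partial>lborel) \<le> 2 * (\<integral>\<^sup>+x. ennreal (A x) \<partial>lborel) + 2 * (\<integral>\<^sup>+x. ennreal (B x) \<partial>lborel)"
proof -
  have "(\<integral>\<^sup>+x. ennreal (X x) \<partial>lborel) \<le> (\<integral>\<^sup>+x. 2 * ennreal (A x) + 2 * ennreal (B x) \<partial>lborel)"
  proof (rule nn_integral_mono)
    fix x
    have "ennreal (X x) \<le> ennreal (2 * A x + 2 * B x)" using assms(5) by (rule ennreal_leI)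
    also have "\<dots> = 2 * ennreal (A x) + 2 * ennreal (B x)"
      using assms(3,4)[of x] by (simp add: ennreal_plus ennreal_mult)
    finally show "ennreal (X x) \<le> 2 * ennreal (A x) + 2 * ennreal (B x)" .
  qed
  also have "\<dots> = 2 * (\<integral>\<^sup>+x. ennreal (A x) \<partial>lborel) + 2 * (\<integral>\<^sup>+x. ennreal (B x) \<partial>lborel)"
    using assms(1,2) by (simp add: nn_integral_add nn_integral_cmult)
  finally show ?thesis .
qed

lemma V_meas: "V \<in> borel_measurable lborel"
  using Vc by (simp add: borel_measurable_continuous_onI)

lemma c1c_meas: "c1c f L \<Longrightarrow> f \<in> borel_measurable lborel" "c1c f L \<Longrightarrow> deriv f \<in> borel_measurable lborel"
  using c1c_cont[of f L] unfolding c1c_def by (auto simp: borel_measurable_continuous_onI)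

definition Ef :: "(real \<Rightarrow> real) \<Rightarrow> (real \<Rightarrow> real) \<Rightarrow> (real \<Rightarrow> real) \<Rightarrow> ennreal" where
  "Ef f u g = (\<integral>\<^sup>+x. ennreal ((deriv f x - g x)\<^sup>2 + V x * (f x - u x)\<^sup>2) \<partial>lborel)"

lemma en_diff_le:
  assumes f: "c1c f L1" and h: "c1c h L2" and [measurable]: "u \<in> borel_measurable lborel" "g \<in> borel_measurable lborel"
  shows "en (\<lambda>x. f x - h x) \<le> 2 * Ef f u g + 2 * Ef h u g"
  unfolding en_def Ef_def c1c_diff(2)[OF f h]
proof (rule nn_2sum)
  note [measurable] = c1c_meas[OF f] c1c_meas[OF h] V_meas
  show "(\<lambda>x. (deriv f x - g x)\<^sup>2 + V x * (f x - u x)\<^sup>2) \<in> borel_measurable lborel" by measurable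
  show "(\<lambda>x. (deriv h x - g x)\<^sup>2 + V x * (h x - u x)\<^sup>2) \<in> borel_measurable lborel" by measurable
  show "0 \<le> (deriv f x - g x)\<^sup>2 + V x * (f x - u x)\<^sup>2" for x
    using Vge[of x] v0 by (intro add_nonneg_nonneg mult_nonneg_nonneg) auto
  show "0 \<le> (deriv h x - g x)\<^sup>2 + V x * (h x - u x)\<^sup>2" for x
    using Vge[of x] v0 by (intro add_nonneg_nonneg mult_nonneg_nonneg) auto
  fix x
  have "V x * (f x - h x)\<^sup>2 \<le> V x * (2 * (f x - u x)\<^sup>2 + 2 * (h x - u x)\<^sup>2)"
    using Vge[of x] v0 by (intro mult_left_mono sq_ineq) auto
  then show "(deriv f x - deriv h x)\<^sup>2 + V x * (f x - h x)\<^sup>2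
      \<le> 2 * ((deriv f x - g x)\<^sup>2 + V x * (f x - u x)\<^sup>2) + 2 * ((deriv h x - g x)\<^sup>2 + V x * (h x - u x)\<^sup>2)"
    using sq_ineq[of "deriv f x" "deriv h x" "g x"] by (simp add: algebra_simps)
qed

lemma en_le:
  assumes f: "c1c f L" and [measurable]: "u \<in> borel_measurable lborel" "g \<in> borel_measurable lborel"
  shows "en f \<le> 2 * Ef f u g + 2 * (\<integral>\<^sup>+x. ennreal ((g x)\<^sup>2 + V x * (u x)\<^sup>2) \<partial>lborel)"
  unfolding en_def Ef_def
proof (rule nn_2sum)
  note [measurable] = c1c_meas[OF f] V_meas
  show "(\<lambda>x. (deriv f x - g x)\<^sup>2 + V x * (f x - u x)\<^sup>2) \<in> borel_measurable lborel" by measurable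
  show "(\<lambda>x. (g x)\<^sup>2 + V x * (u x)\<^sup>2) \<in> borel_measurable lborel" by measurable
  show "0 \<le> (deriv f x - g x)\<^sup>2 + V x * (f x - u x)\<^sup>2" for x
    using Vge[of x] v0 by (intro add_nonneg_nonneg mult_nonneg_nonneg) auto
  show "0 \<le> (g x)\<^sup>2 + V x * (u x)\<^sup>2" for x
    using Vge[of x] v0 by (intro add_nonneg_nonneg mult_nonneg_nonneg) auto
  fix x
  have "V x * (f x)\<^sup>2 \<le> V x * (2 * (f x - u x)\<^sup>2 + 2 * (0 - u x)\<^sup>2)"
    using Vge[of x] v0 sq_ineq[of "f x" 0 "u x"] by (intro mult_left_mono) auto
  then show "(deriv f x)\<^sup>2 + V x * (f x)\<^sup>2
      \<le> 2 * ((deriv f x - g x)\<^sup>2 + V x * (f x - u x)\<^sup>2) + 2 * ((g x)\<^sup>2 + V x * (u x)\<^sup>2)"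
    using sq_ineq[of "deriv f x" 0 "g x"] by (simp add: algebra_simps)
qed

lemma approx:
  assumes "(u, g) \<in> H1V V"
  shows "\<exists>\<phi> Ls. (\<forall>n. c1c (\<phi> n) (Ls n) \<and> c1c (deriv (\<phi> n)) (Ls n)) \<and> (\<lambda>n. Ef (\<phi> n) u g) \<longlonglongrightarrow> 0"
proof -
  obtain \<phi> where t: "\<And>n. test_fun (\<phi> n)" and
    lim: "(\<lambda>n. \<integral>\<^sup>+x. ennreal ((deriv (\<phi> n) x - g x)\<^sup>2 + V x * (\<phi> n x - u x)\<^sup>2) \<partial>lborel) \<longlonglongrightarrow> 0"
    using assms unfolding H1V_def by auto
  have "\<forall>n. \<exists>L. c1c (\<phi> n) L \<and> c1c (deriv (\<phi> n)) L" using test_fun_c1c t by blast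
  then obtain Ls where "\<forall>n. c1c (\<phi> n) (Ls n) \<and> c1c (deriv (\<phi> n)) (Ls n)" by metis
  then show ?thesis using lim unfolding Ef_def by blast
qed


lemma rep:
  assumes uv: "(u, g) \<in> H1V V"
  defines "N \<equiv> (\<integral>\<^sup>+x. ennreal ((g x)\<^sup>2 + V x * (u x)\<^sup>2) \<partial>lborel)"
  shows "\<exists>w \<phi> Ls. continuous_on UNIV w \<and> (AE x in lborel. u x = w x) \<and>
     (\<forall>x. ennreal (min 1 v0 * (w x)\<^sup>2) \<le> 2 * N) \<and>
     (\<forall>M x. 0 < M \<longrightarrow> (\<forall>t. \<bar>x\<bar> \<le> \<bar>t\<bar> \<longrightarrow> M \<le> V t) \<longrightarrow> ennreal (sqrt M * (w x)\<^sup>2) \<le> 2 * N) \<and>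
     (\<forall>s x y. 0 < s \<longrightarrow> x \<le> y \<longrightarrow> ennreal (s * \<bar>w y - w x\<bar> - s\<^sup>2 * (y - x)) \<le> 2 * N) \<and>
     (\<forall>n. c1c (\<phi> n) (Ls n) \<and> c1c (deriv (\<phi> n)) (Ls n)) \<and> (\<lambda>n. Ef (\<phi> n) u g) \<longlonglongrightarrow> 0 \<and>
     (\<forall>\<epsilon>>0. \<exists>K. \<forall>n\<ge>K. \<forall>x. \<bar>\<phi> n x - w x\<bar> < \<epsilon>)"
proof -
  have um[measurable]: "u \<in> borel_measurable lborel" and gm[measurable]: "g \<in> borel_measurable lborel"
    using uv unfolding H1V_def by auto
  obtain \<phi> Ls where c: "\<And>n. c1c (\<phi> n) (Ls n)" "\<And>n. c1c (deriv (\<phi> n)) (Ls n)"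
    and e: "(\<lambda>n. Ef (\<phi> n) u g) \<longlonglongrightarrow> 0"
    using approx[OF uv] by blast
  define e where "e n = Ef (\<phi> n) u g" for n
  have e0: "e \<longlonglongrightarrow> 0" using e unfolding e_def by simp
  define c where "c = min 1 v0"
  have cpos: "0 < c" using v0 unfolding c_def by auto
  have bnd: "ennreal (c * (\<phi> m x - \<phi> n x)\<^sup>2) \<le> 2 * e m + 2 * e n" for m n x
  proof -
    have "ennreal (min 1 v0 * ((\<lambda>x. \<phi> m x - \<phi> n x) x)\<^sup>2) \<le> en (\<lambda>x. \<phi> m x - \<phi> n x)"
      by (rule est_sup[OF c1c_diff(1)[OF c(1) c(1)]])
    also have "\<dots> \<le> 2 * Ef (\<phi> m) u g + 2 * Ef (\<phi> n) u g"
      by (rule en_diff_le[OF c(1) c(1) um gm])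
    finally show ?thesis unfolding e_def c_def by simp
  qed
  have cauchy: "\<forall>\<epsilon>>0. \<exists>K. \<forall>m n x. K \<le> m \<and> K \<le> n \<and> True \<longrightarrow> dist (\<phi> m x) (\<phi> n x) < \<epsilon>"
    by (rule unif_cauchy_aux[OF e0 cpos bnd])
  then obtain w where w: "\<forall>\<epsilon>>0. \<exists>K. \<forall>n x. K \<le> n \<and> True \<longrightarrow> dist (\<phi> n x) (w x) < \<epsilon>"
    using uniformly_convergent_eq_cauchy[of "\<lambda>_. True" \<phi>] by blast
  then have unif: "\<forall>\<epsilon>>0. \<exists>K. \<forall>n\<ge>K. \<forall>x. \<bar>\<phi> n x - w x\<bar> < \<epsilon>" by (simp add: dist_real_def)
  have pt: "(\<lambda>n. \<phi> n x) \<longlonglongrightarrow> w x" for x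
  proof (rule LIMSEQ_I)
    fix r :: real assume "0 < r"
    then obtain K where "\<forall>n\<ge>K. \<forall>x. \<bar>\<phi> n x - w x\<bar> < r" using unif by blast
    then show "\<exists>no. \<forall>n\<ge>no. norm (\<phi> n x - w x) < r" by auto
  qed
  have wc: "continuous_on UNIV w"
  proof (rule uniform_limit_theorem)
    show "\<forall>\<^sub>F n in sequentially. continuous_on UNIV (\<phi> n)" using c1c_cont c by (intro always_eventually allI) blast
    show "uniform_limit UNIV \<phi> w sequentially"
      unfolding uniform_limit_sequentially_iff
    proof (intro allI impI)
      fix \<epsilon> :: real assume "0 < \<epsilon>"
      then obtain K where "\<forall>n\<ge>K. \<forall>x. \<bar>\<phi> n x - w x\<bar> < \<epsilon>" using unif by blast
      then show "\<exists>N. \<forall>n\<ge>N. \<forall>x\<in>UNIV. dist (\<phi> n x) (w x) < \<epsilon>" by (auto simp: dist_real_def)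
    qed
  qed simp
  have Nle: "en (\<phi> n) \<le> 2 * e n + 2 * N" for n unfolding e_def N_def by (rule en_le[OF c(1)]) auto
  have b1: "ennreal (c * (w x)\<^sup>2) \<le> 2 * N" for x
  proof (rule lim_ennreal_bound[OF _ e0])
    show "(\<lambda>n. c * (\<phi> n x)\<^sup>2) \<longlonglongrightarrow> c * (w x)\<^sup>2" by (intro tendsto_intros pt)
    show "ennreal (c * (\<phi> n x)\<^sup>2) \<le> 2 * e n + 2 * N" for n
      using est_sup[OF c(1), of n x] Nle[of n] unfolding c_def by (rule order_trans)
  qed
  have b2: "ennreal (sqrt M * (w x)\<^sup>2) \<le> 2 * N" if M: "0 < M" "\<forall>t. \<bar>x\<bar> \<le> \<bar>t\<bar> \<longrightarrow> M \<le> V t" for M x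
  proof (rule lim_ennreal_bound[OF _ e0])
    show "(\<lambda>n. sqrt M * (\<phi> n x)\<^sup>2) \<longlonglongrightarrow> sqrt M * (w x)\<^sup>2" by (intro tendsto_intros pt)
    show "ennreal (sqrt M * (\<phi> n x)\<^sup>2) \<le> 2 * e n + 2 * N" for n
      using est_tail[OF c(1) M(1), of x n] M(2) Nle[of n] by (meson order_trans)
  qed
  have b3: "ennreal (s * \<bar>w y - w x\<bar> - s\<^sup>2 * (y - x)) \<le> 2 * N" if sxy: "0 < s" "x \<le> y" for s x y
  proof (rule lim_ennreal_bound[OF _ e0])
    show "(\<lambda>n. s * \<bar>\<phi> n y - \<phi> n x\<bar> - s\<^sup>2 * (y - x)) \<longlonglongrightarrow> s * \<bar>w y - w x\<bar> - s\<^sup>2 * (y - x)"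
      by (intro tendsto_intros pt)
    show "ennreal (s * \<bar>\<phi> n y - \<phi> n x\<bar> - s\<^sup>2 * (y - x)) \<le> 2 * e n + 2 * N" for n
      using est_equi[OF c(1) sxy, of n] Nle[of n] by (rule order_trans)
  qed
  have ae: "AE x in lborel. u x = w x"
  proof -
    note [measurable] = V_meas c1c_meas[OF c(1)]
    have wm[measurable]: "w \<in> borel_measurable lborel" using wc by (simp add: borel_measurable_continuous_onI)
    have "(\<integral>\<^sup>+x. ennreal (V x * (w x - u x)\<^sup>2) \<partial>lborel)
        = (\<integral>\<^sup>+x. liminf (\<lambda>n. ennreal (V x * (\<phi> n x - u x)\<^sup>2)) \<partial>lborel)"
    proof (rule nn_integral_cong)
      fix x
      have "(\<lambda>n. ennreal (V x * (\<phi> n x - u x)\<^sup>2)) \<longlonglongrightarrow> ennreal (V x * (w x - u x)\<^sup>2)"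
        by (intro tendsto_intros pt)
      then show "ennreal (V x * (w x - u x)\<^sup>2) = liminf (\<lambda>n. ennreal (V x * (\<phi> n x - u x)\<^sup>2))"
        by (simp add: lim_imp_Liminf)
    qed
    also have "\<dots> \<le> liminf (\<lambda>n. (\<integral>\<^sup>+x. ennreal (V x * (\<phi> n x - u x)\<^sup>2) \<partial>lborel))"
      by (intro nn_integral_liminf) measurable
    also have "\<dots> \<le> liminf e"
    proof (intro Liminf_mono always_eventually allI)
      fix n
      show "(\<integral>\<^sup>+x. ennreal (V x * (\<phi> n x - u x)\<^sup>2) \<partial>lborel) \<le> e n"
        unfolding e_def Ef_def by (intro nn_integral_mono ennreal_leI) auto
    qed
    also have "\<dots> = 0" using e0 by (simp add: lim_imp_Liminf)
    finally have "(\<integral>\<^sup>+x. ennreal (V x * (w x - u x)\<^sup>2) \<partial>lborel) = 0" by simp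
    then have "AE x in lborel. ennreal (V x * (w x - u x)\<^sup>2) = 0"
      by (subst (asm) nn_integral_0_iff_AE) measurable
    then show ?thesis
    proof (rule AE_mp, intro AE_I2 impI)
      fix x assume "ennreal (V x * (w x - u x)\<^sup>2) = 0"
      moreover have "0 < V x" using Vge[of x] v0 by simp
      ultimately show "u x = w x" by (simp add: ennreal_eq_0_iff mult_le_0_iff)
    qed
  qed
  show ?thesis
    apply (rule exI[of _ w], rule exI[of _ \<phi>], rule exI[of _ Ls])
    apply (intro conjI)
    subgoal by (rule wc)
    subgoal by (rule ae)
    subgoal using b1 unfolding c_def by blast
    subgoal using b2 by blast
    subgoal using b3 by blast
    subgoal using c by blast
    subgoal by (rule e)
    subgoal by (rule unif)
    done
qed

lemma dsq_bound:
  assumes f: "c1c f L" and df: "c1c (deriv f) L"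
    and cm: "\<And>m. c1c (\<phi> m) (Ls m)"
    and unif0: "\<And>\<epsilon>. 0 < \<epsilon> \<Longrightarrow> \<exists>K. \<forall>m\<ge>K. \<forall>x. \<bar>\<phi> m x\<bar> < \<epsilon>"
    and e: "(\<lambda>m. Ef (\<phi> m) u g) \<longlonglongrightarrow> 0"
    and um: "u \<in> borel_measurable lborel" and gm: "g \<in> borel_measurable lborel"
  shows "(\<integral>\<^sup>+x. ennreal ((deriv f x)\<^sup>2) \<partial>lborel) \<le> 2 * Ef f u g"
proof -
  define \<alpha> where "\<alpha> = - (\<bar>L\<bar> + 1)"
  define \<beta> where "\<beta> = \<bar>L\<bar> + 1"
  have ab: "\<alpha> \<le> \<beta>" unfolding \<alpha>_def \<beta>_def by simp
  define \<psi> where "\<psi> = deriv f"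
  define \<psi>' where "\<psi>' = deriv (deriv f)"
  have \<psi>z: "\<psi> \<alpha> = 0" "\<psi> \<beta> = 0" using f unfolding c1c_def \<psi>_def \<alpha>_def \<beta>_def by auto
  have \<psi>zo: "\<psi> x = 0" if "x \<notin> {\<alpha>..\<beta>}" for x using f that unfolding c1c_def \<psi>_def \<alpha>_def \<beta>_def by auto
  have c\<psi>: "continuous_on UNIV \<psi>" using f unfolding c1c_def \<psi>_def by auto
  have c\<psi>': "continuous_on UNIV \<psi>'" using df unfolding c1c_def \<psi>'_def by auto
  have d\<psi>: "(\<psi> has_real_derivative \<psi>' x) (at x)" for x using df unfolding c1c_def \<psi>_def \<psi>'_def by auto
  have ic: "h integrable_on {\<alpha>..\<beta>}" if "continuous_on UNIV h" for h :: "real \<Rightarrow> real"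
    by (rule integrable_continuous_interval) (rule continuous_on_subset[OF that], auto)
  define P where "P = integral {\<alpha>..\<beta>} (\<lambda>x. (\<psi> x)\<^sup>2)"
  define K where "K = integral {\<alpha>..\<beta>} (\<lambda>x. \<bar>\<psi>' x\<bar>)"
  have K0: "0 \<le> K" unfolding K_def by (rule integral_nonneg) (auto intro: ic continuous_intros c\<psi>')
  have key: "ennreal P \<le> 2 * Ef f u g + 2 * Ef (\<phi> m) u g + ennreal (2 * \<epsilon> * K)"
    if m: "\<And>x. \<bar>\<phi> m x\<bar> \<le> \<epsilon>" for m \<epsilon>
  proof -
    have \<epsilon>0: "0 \<le> \<epsilon>" using m[of 0] by simp
    define dm where "dm = deriv (\<phi> m)"
    have cphi: "continuous_on UNIV (\<phi> m)" by (rule c1c_cont[OF cm])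
    have cdm: "continuous_on UNIV dm" using cm unfolding c1c_def dm_def by auto
    have ddm: "(\<phi> m has_real_derivative dm x) (at x)" for x using cm unfolding c1c_def dm_def by auto
    have parts: "integral {\<alpha>..\<beta>} (\<lambda>x. \<psi> x * dm x) = - integral {\<alpha>..\<beta>} (\<lambda>x. \<phi> m x * \<psi>' x)"
    proof -
      have "((\<lambda>x. dm x * \<psi> x + \<phi> m x * \<psi>' x) has_integral (\<phi> m \<beta> * \<psi> \<beta> - \<phi> m \<alpha> * \<psi> \<alpha>)) {\<alpha>..\<beta>}"
      proof (rule fundamental_theorem_of_calculus[OF ab])
        fix x assume "x \<in> {\<alpha>..\<beta>}"
        have "((\<lambda>x. \<phi> m x * \<psi> x) has_real_derivative dm x * \<psi> x + \<phi> m x * \<psi>' x) (at x)"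
          using ddm[of x] d\<psi>[of x] by (auto intro!: derivative_eq_intros)
        then show "((\<lambda>x. \<phi> m x * \<psi> x) has_vector_derivative dm x * \<psi> x + \<phi> m x * \<psi>' x) (at x within {\<alpha>..\<beta>})"
          by (simp add: has_real_derivative_iff_has_vector_derivative[symmetric] has_field_derivative_at_within)
      qed
      then have "integral {\<alpha>..\<beta>} (\<lambda>x. dm x * \<psi> x + \<phi> m x * \<psi>' x) = 0"
        using \<psi>z by (simp add: integral_unique)
      moreover have "integral {\<alpha>..\<beta>} (\<lambda>x. dm x * \<psi> x + \<phi> m x * \<psi>' x)
          = integral {\<alpha>..\<beta>} (\<lambda>x. \<psi> x * dm x) + integral {\<alpha>..\<beta>} (\<lambda>x. \<phi> m x * \<psi>' x)"
        by (subst integral_add) (auto simp: mult.commute intro!: ic continuous_intros cdm c\<psi> cphi c\<psi>')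
      ultimately show ?thesis by simp
    qed
    have Ib: "\<bar>integral {\<alpha>..\<beta>} (\<lambda>x. \<phi> m x * \<psi>' x)\<bar> \<le> \<epsilon> * K"
    proof -
      have "\<bar>integral {\<alpha>..\<beta>} (\<lambda>x. \<phi> m x * \<psi>' x)\<bar> \<le> integral {\<alpha>..\<beta>} (\<lambda>x. \<epsilon> * \<bar>\<psi>' x\<bar>)"
      proof (rule integral_norm_bound_integral[where 'a=real, unfolded real_norm_def])
        show "(\<lambda>x. \<phi> m x * \<psi>' x) integrable_on {\<alpha>..\<beta>}" by (intro ic continuous_intros cphi c\<psi>')
        show "(\<lambda>x. \<epsilon> * \<bar>\<psi>' x\<bar>) integrable_on {\<alpha>..\<beta>}" by (intro ic continuous_intros c\<psi>')
        fix x show "\<bar>\<phi> m x * \<psi>' x\<bar> \<le> \<epsilon> * \<bar>\<psi>' x\<bar>"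
          using m[of x] by (simp add: abs_mult mult_right_mono)
      qed
      also have "\<dots> = \<epsilon> * K" unfolding K_def by simp
      finally show ?thesis .
    qed
    define D where "D = integral {\<alpha>..\<beta>} (\<lambda>x. (\<psi> x - dm x)\<^sup>2)"
    have PD: "P \<le> D + 2 * \<epsilon> * K"
    proof -
      have "P \<le> integral {\<alpha>..\<beta>} (\<lambda>x. (\<psi> x - dm x)\<^sup>2 + 2 * (\<psi> x * dm x))"
        unfolding P_def
      proof (rule integral_le)
        show "(\<lambda>x. (\<psi> x)\<^sup>2) integrable_on {\<alpha>..\<beta>}" by (intro ic continuous_intros c\<psi>)
        show "(\<lambda>x. (\<psi> x - dm x)\<^sup>2 + 2 * (\<psi> x * dm x)) integrable_on {\<alpha>..\<beta>}"
          by (intro ic continuous_intros c\<psi> cdm)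
        fix x show "(\<psi> x)\<^sup>2 \<le> (\<psi> x - dm x)\<^sup>2 + 2 * (\<psi> x * dm x)"
          by (simp add: power2_diff)
      qed
      also have "\<dots> = D + 2 * integral {\<alpha>..\<beta>} (\<lambda>x. \<psi> x * dm x)"
        unfolding D_def by (subst integral_add) (auto intro!: ic continuous_intros c\<psi> cdm)
      also have "\<dots> \<le> D + 2 * (\<epsilon> * K)"
      proof -
        have "- integral {\<alpha>..\<beta>} (\<lambda>x. \<phi> m x * \<psi>' x) \<le> \<epsilon> * K" using Ib unfolding abs_le_iff by linarith
        then show ?thesis unfolding parts by linarith
      qed
      finally show ?thesis by simp
    qed
    have D0: "0 \<le> D" unfolding D_def by (rule integral_nonneg) (auto intro!: ic continuous_intros c\<psi> cdm)
    have "D \<le> integral {\<alpha>..\<beta>} (\<lambda>t. (deriv (\<lambda>x. f x - \<phi> m x) t)\<^sup>2 + V t * ((\<lambda>x. f x - \<phi> m x) t)\<^sup>2)"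
      unfolding D_def
    proof (rule integral_le)
      show "(\<lambda>x. (\<psi> x - dm x)\<^sup>2) integrable_on {\<alpha>..\<beta>}" by (intro ic continuous_intros c\<psi> cdm)
      show "(\<lambda>t. (deriv (\<lambda>x. f x - \<phi> m x) t)\<^sup>2 + V t * ((\<lambda>x. f x - \<phi> m x) t)\<^sup>2) integrable_on {\<alpha>..\<beta>}"
        by (intro ic en_integrand_cont[OF c1c_diff(1)[OF f cm]])
      fix x
      have "0 \<le> V x * (f x - \<phi> m x)\<^sup>2" using Vge[of x] v0 by simp
      then show "(\<psi> x - dm x)\<^sup>2 \<le> (deriv (\<lambda>x. f x - \<phi> m x) x)\<^sup>2 + V x * ((\<lambda>x. f x - \<phi> m x) x)\<^sup>2"
        unfolding c1c_diff(2)[OF f cm] \<psi>_def dm_def by simp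
    qed
    then have "ennreal D \<le> ennreal (integral {\<alpha>..\<beta>} (\<lambda>t. (deriv (\<lambda>x. f x - \<phi> m x) t)\<^sup>2 + V t * ((\<lambda>x. f x - \<phi> m x) t)\<^sup>2))"
      by (rule ennreal_leI)
    also have "\<dots> \<le> en (\<lambda>x. f x - \<phi> m x)" by (rule en_sub_le[OF c1c_diff(1)[OF f cm] ab])
    also have "\<dots> \<le> 2 * Ef f u g + 2 * Ef (\<phi> m) u g" by (rule en_diff_le[OF f cm um gm])
    finally have DE: "ennreal D \<le> 2 * Ef f u g + 2 * Ef (\<phi> m) u g" .
    have "ennreal P \<le> ennreal (D + 2 * \<epsilon> * K)" using PD by (rule ennreal_leI)
    also have "\<dots> = ennreal D + ennreal (2 * \<epsilon> * K)" using D0 \<epsilon>0 K0 by (intro ennreal_plus) auto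
    also have "\<dots> \<le> 2 * Ef f u g + 2 * Ef (\<phi> m) u g + ennreal (2 * \<epsilon> * K)" using DE by (rule add_right_mono)
    finally show ?thesis .
  qed
  have "ennreal P \<le> 2 * Ef f u g"
  proof (rule ennreal_le_epsilon)
    fix \<delta> :: real assume \<delta>: "0 < \<delta>"
    define \<epsilon> where "\<epsilon> = \<delta> / (4 * (K + 1))"
    have \<epsilon>: "0 < \<epsilon>" using \<delta> K0 unfolding \<epsilon>_def by simp
    obtain K1 where K1: "\<And>m x. K1 \<le> m \<Longrightarrow> \<bar>\<phi> m x\<bar> < \<epsilon>" using unif0[OF \<epsilon>] by blast
    have "eventually (\<lambda>m. Ef (\<phi> m) u g < ennreal (\<delta>/4)) sequentially"
      using e \<delta> by (intro order_tendstoD(2)) auto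
    then obtain K2 where K2: "\<And>m. K2 \<le> m \<Longrightarrow> Ef (\<phi> m) u g < ennreal (\<delta>/4)"
      unfolding eventually_sequentially by blast
    define m where "m = max K1 K2"
    have "ennreal P \<le> 2 * Ef f u g + 2 * Ef (\<phi> m) u g + ennreal (2 * \<epsilon> * K)"
      by (rule key, rule less_imp_le, rule K1) (simp add: m_def)
    also have "\<dots> \<le> 2 * Ef f u g + ennreal \<delta>"
    proof -
      have "2 * Ef (\<phi> m) u g \<le> 2 * ennreal (\<delta>/4)"
        using K2[of m] unfolding m_def by (intro mult_left_mono) auto
      then have "2 * Ef (\<phi> m) u g + ennreal (2 * \<epsilon> * K) \<le> 2 * ennreal (\<delta>/4) + ennreal (2 * \<epsilon> * K)"
        by (rule add_right_mono)
      also have "2 * ennreal (\<delta>/4) + ennreal (2 * \<epsilon> * K) = ennreal (2 * (\<delta>/4) + 2 * \<epsilon> * K)"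
        using \<delta> \<epsilon> K0 by (intro ennreal_2ab) auto
      also have "\<dots> \<le> ennreal \<delta>"
      proof (rule ennreal_leI)
        have "2 * \<epsilon> * K = \<delta> / 2 * (K / (K + 1))" unfolding \<epsilon>_def using K0 by (simp add: field_simps)
        also have "\<dots> \<le> \<delta> / 2 * 1" using \<delta> K0 by (intro mult_left_mono) auto
        finally show "2 * (\<delta>/4) + 2 * \<epsilon> * K \<le> \<delta>" by simp
      qed
      finally have "2 * Ef (\<phi> m) u g + ennreal (2 * \<epsilon> * K) \<le> ennreal \<delta>" .
      then have "2 * Ef f u g + (2 * Ef (\<phi> m) u g + ennreal (2 * \<epsilon> * K)) \<le> 2 * Ef f u g + ennreal \<delta>"
        by (rule add_left_mono)
      then show ?thesis by (simp add: add.assoc)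
    qed
    finally show "ennreal P \<le> 2 * Ef f u g + ennreal \<delta>" .
  qed
  moreover have "(\<integral>\<^sup>+x. ennreal ((deriv f x)\<^sup>2) \<partial>lborel) = ennreal P"
    unfolding P_def \<psi>_def[symmetric]
    by (rule nn_interval_eq) (auto intro!: continuous_intros c\<psi> simp: \<psi>zo)
  ultimately show ?thesis by simp
qed

lemma H1V_inj_aux:
  assumes uv: "(u, g) \<in> H1V V" and u0: "AE x in lborel. u x = 0"
  shows "AE x in lborel. g x = 0"
proof -
  have um[measurable]: "u \<in> borel_measurable lborel" and gm[measurable]: "g \<in> borel_measurable lborel"
    using uv unfolding H1V_def by auto
  obtain w \<phi> Ls where wc: "continuous_on UNIV w" and ae: "AE x in lborel. u x = w x"
    and c: "\<And>n. c1c (\<phi> n) (Ls n)" "\<And>n. c1c (deriv (\<phi> n)) (Ls n)"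
    and e: "(\<lambda>n. Ef (\<phi> n) u g) \<longlonglongrightarrow> 0"
    and unif: "\<forall>\<epsilon>>0. \<exists>K. \<forall>n\<ge>K. \<forall>x. \<bar>\<phi> n x - w x\<bar> < \<epsilon>"
    using rep[OF uv] by blast
  have "AE x in lborel. w x = 0" using ae u0 by eventually_elim simp
  then have aeL: "AE x in lebesgue. x \<in> {x. w x = 0}" by (intro AE_completion) simp
  have cl: "closed {x. w x = 0}" using wc by (intro closed_Collect_eq continuous_intros) auto
  have w0: "w x = 0" for x using mem_closed_if_AE_lebesgue[OF cl aeL] by simp
  have unif0: "\<exists>K. \<forall>m\<ge>K. \<forall>x. \<bar>\<phi> m x\<bar> < \<epsilon>" if "0 < \<epsilon>" for \<epsilon>
    using unif that w0 by simp
  have bound: "(\<integral>\<^sup>+x. ennreal ((g x)\<^sup>2) \<partial>lborel) \<le> 6 * Ef (\<phi> n) u g" for n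
  proof -
    note [measurable] = c1c_meas[OF c(1)] V_meas
    have "(\<integral>\<^sup>+x. ennreal ((g x)\<^sup>2) \<partial>lborel)
       \<le> 2 * Ef (\<phi> n) u g + 2 * (\<integral>\<^sup>+x. ennreal ((deriv (\<phi> n) x)\<^sup>2) \<partial>lborel)"
      unfolding Ef_def
    proof (rule nn_2sum)
      show "(\<lambda>x. (deriv (\<phi> n) x - g x)\<^sup>2 + V x * (\<phi> n x - u x)\<^sup>2) \<in> borel_measurable lborel" by measurable
      show "(\<lambda>x. (deriv (\<phi> n) x)\<^sup>2) \<in> borel_measurable lborel" by measurable
      show "0 \<le> (deriv (\<phi> n) x - g x)\<^sup>2 + V x * (\<phi> n x - u x)\<^sup>2" for x
        using Vge[of x] v0 by (intro add_nonneg_nonneg mult_nonneg_nonneg) auto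
      show "0 \<le> (deriv (\<phi> n) x)\<^sup>2" for x by simp
      fix x
      have "0 \<le> V x * (\<phi> n x - u x)\<^sup>2" using Vge[of x] v0 by simp
      moreover have "(g x - 0)\<^sup>2 \<le> 2 * (g x - deriv (\<phi> n) x)\<^sup>2 + 2 * (0 - deriv (\<phi> n) x)\<^sup>2"
        by (rule sq_ineq)
      moreover have "(g x - deriv (\<phi> n) x)\<^sup>2 = (deriv (\<phi> n) x - g x)\<^sup>2" by (simp add: power2_commute)
      ultimately show "(g x)\<^sup>2 \<le> 2 * ((deriv (\<phi> n) x - g x)\<^sup>2 + V x * (\<phi> n x - u x)\<^sup>2) + 2 * (deriv (\<phi> n) x)\<^sup>2"
        by simp
    qed
    also have "\<dots> \<le> 2 * Ef (\<phi> n) u g + 2 * (2 * Ef (\<phi> n) u g)"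
      by (intro add_left_mono mult_left_mono dsq_bound[OF c(1) c(2) c(1) unif0 e um gm]) auto
    also have "\<dots> = 6 * Ef (\<phi> n) u g"
    proof -
      have "(2::ennreal) * Ef (\<phi> n) u g + 2 * (2 * Ef (\<phi> n) u g) = (2 + 2 * 2) * Ef (\<phi> n) u g"
        by (simp only: distrib_right mult.assoc)
      also have "(2 + 2 * 2::ennreal) = 6" by simp
      finally show ?thesis .
    qed
    finally show ?thesis .
  qed
  have lim6: "(\<lambda>n. 6 * Ef (\<phi> n) u g) \<longlonglongrightarrow> 6 * 0"
    by (rule ennreal_tendsto_cmult[OF _ e]) simp
  have "(\<integral>\<^sup>+x. ennreal ((g x)\<^sup>2) \<partial>lborel) \<le> 6 * 0"
    by (rule tendsto_lowerbound[OF lim6]) (auto intro: always_eventually bound)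
  then have "(\<integral>\<^sup>+x. ennreal ((g x)\<^sup>2) \<partial>lborel) = 0" by simp
  then have "AE x in lborel. ennreal ((g x)\<^sup>2) = 0"
    by (subst (asm) nn_integral_0_iff_AE) measurable
  then show "AE x in lborel. g x = 0" by eventually_elim simp
qed

lemma H1V_inj: "H1V_injective V"
  unfolding H1V_injective_def using H1V_inj_aux by blast

end




lemma sq_to_abs:
  fixes a b c :: real
  assumes "0 < c" "0 \<le> b" "c * a\<^sup>2 \<le> 2 * b\<^sup>2"
  shows "\<bar>a\<bar> \<le> sqrt (2 / c) * b"
proof -
  have "\<bar>a\<bar>\<^sup>2 \<le> (sqrt (2 / c) * b)\<^sup>2"
    using assms by (simp add: power_mult_distrib field_simps)
  then show ?thesis by (rule power2_le_imp_le) (use assms in simp)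
qed

lemma abs_powr_split:
  fixes a b \<tau> :: real
  assumes t: "2 < \<tau>" and ab: "\<bar>a\<bar> \<le> b"
  shows "\<bar>a\<bar> powr \<tau> \<le> a\<^sup>2 * b powr (\<tau> - 2)"
proof (cases "a = 0")
  case True
  then show ?thesis using t by simp
next
  case False
  then have a0: "0 < \<bar>a\<bar>" by simp
  have "\<bar>a\<bar> powr \<tau> = a\<^sup>2 * \<bar>a\<bar> powr (\<tau> - 2)"
    using powr_add[of "\<bar>a\<bar>" 2 "\<tau> - 2"] a0 by (simp add: powr_numeral)
  also have "a\<^sup>2 * \<bar>a\<bar> powr (\<tau> - 2) \<le> a\<^sup>2 * b powr (\<tau> - 2)"
    using ab t by (intro mult_left_mono powr_mono2) auto
  finally show ?thesis .
qed

lemma powr_est: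
  fixes K C n \<tau> :: real
  assumes "0 \<le> K" "K \<le> C" "1 \<le> C" "0 \<le> n" "2 < \<tau>"
  shows "(K * n) powr (\<tau> - 2) * n\<^sup>2 \<le> (C * n) powr \<tau>"
proof (cases "n = 0")
  case True
  then show ?thesis using assms by simp
next
  case False
  then have n0: "0 < n" using assms by simp
  have Cn: "0 < C * n" using assms n0 by simp
  have "(K * n) powr (\<tau> - 2) * n\<^sup>2 \<le> (C * n) powr (\<tau> - 2) * (C * n)\<^sup>2"
  proof (rule mult_mono)
    show "(K * n) powr (\<tau> - 2) \<le> (C * n) powr (\<tau> - 2)"
      using assms by (intro powr_mono2 mult_right_mono) auto
    show "n\<^sup>2 \<le> (C * n)\<^sup>2" using assms n0 by (intro power_mono) (auto simp: mult_le_cancel_right1)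
  qed auto
  also have "(C * n)\<^sup>2 = (C * n) powr 2" using Cn by (simp add: powr_numeral)
  also have "(C * n) powr (\<tau> - 2) * (C * n) powr 2 = (C * n) powr \<tau>"
    using powr_add[of "C * n" "\<tau> - 2" 2] by simp
  finally show ?thesis .
qed

lemma tendsto_ennreal_0I:
  fixes X :: "nat \<Rightarrow> ennreal"
  assumes "\<And>\<delta>. 0 < \<delta> \<Longrightarrow> \<exists>N. \<forall>k\<ge>N. X k \<le> ennreal \<delta>"
  shows "X \<longlonglongrightarrow> 0"
proof (rule order_tendstoI)
  fix a :: ennreal assume "a < 0" then show "eventually (\<lambda>k. a < X k) sequentially" by simp
next
  fix a :: ennreal assume a: "0 < a"
  obtain \<delta> where \<delta>: "0 < \<delta>" "ennreal \<delta> < a"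
  proof (cases a rule: ennreal_cases)
    case (real r)
    then show ?thesis using a by (intro that[of "r/2"]) (auto simp: ennreal_less_iff)
  next
    case top
    then show ?thesis by (intro that[of 1]) auto
  qed
  obtain N where "\<forall>k\<ge>N. X k \<le> ennreal \<delta>" using assms[OF \<delta>(1)] by blast
  then show "eventually (\<lambda>k. X k < a) sequentially"
    unfolding eventually_sequentially using \<delta>(2) by (meson le_less_trans)
qed

context Vctx
begin

lemma norm_N:
  assumes "(u, g) \<in> H1V V"
  shows "(\<integral>\<^sup>+x. ennreal ((g x)\<^sup>2 + V x * (u x)\<^sup>2) \<partial>lborel) = ennreal ((H1V_norm V (u, g))\<^sup>2)"
proof -
  let ?N = "(\<integral>\<^sup>+x. ennreal ((g x)\<^sup>2 + V x * (u x)\<^sup>2) \<partial>lborel)"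
  have fin: "?N < \<infinity>" using assms unfolding H1V_def by auto
  have "(H1V_norm V (u, g))\<^sup>2 = enn2real ?N" unfolding H1V_norm_def by simp
  then show ?thesis using fin by simp
qed

lemma rep2:
  assumes ug: "ug \<in> H1V V"
  defines "n \<equiv> H1V_norm V ug"
  shows "\<exists>w. continuous_on UNIV w \<and> (AE x in lborel. fst ug x = w x) \<and>
     (\<forall>x. min 1 v0 * (w x)\<^sup>2 \<le> 2 * n\<^sup>2) \<and>
     (\<forall>M x. 0 < M \<longrightarrow> (\<forall>t. \<bar>x\<bar> \<le> \<bar>t\<bar> \<longrightarrow> M \<le> V t) \<longrightarrow> sqrt M * (w x)\<^sup>2 \<le> 2 * n\<^sup>2) \<and>
     (\<forall>s x y. 0 < s \<longrightarrow> x \<le> y \<longrightarrow> s * \<bar>w y - w x\<bar> - s\<^sup>2 * (y - x) \<le> 2 * n\<^sup>2)"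
proof -
  obtain u g where ugd: "ug = (u, g)" by (cases ug)
  have uv: "(u, g) \<in> H1V V" using ug ugd by simp
  have N: "(\<integral>\<^sup>+x. ennreal ((g x)\<^sup>2 + V x * (u x)\<^sup>2) \<partial>lborel) = ennreal (n\<^sup>2)"
    using norm_N[OF uv] unfolding n_def ugd .
  have two: "2 * ennreal (n\<^sup>2) = ennreal (2 * n\<^sup>2)" by (simp add: ennreal_mult)
  have conv: "a \<le> 2 * n\<^sup>2" if "ennreal a \<le> 2 * ennreal (n\<^sup>2)" for a
    using that unfolding two by (subst (asm) ennreal_le_iff) auto
  obtain w where wc: "continuous_on UNIV w" and ae: "AE x in lborel. u x = w x"
    and b1: "\<forall>x. ennreal (min 1 v0 * (w x)\<^sup>2) \<le> 2 * ennreal (n\<^sup>2)"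
    and b2: "\<forall>M x. 0 < M \<longrightarrow> (\<forall>t. \<bar>x\<bar> \<le> \<bar>t\<bar> \<longrightarrow> M \<le> V t) \<longrightarrow> ennreal (sqrt M * (w x)\<^sup>2) \<le> 2 * ennreal (n\<^sup>2)"
    and b3: "\<forall>s x y. 0 < s \<longrightarrow> x \<le> y \<longrightarrow> ennreal (s * \<bar>w y - w x\<bar> - s\<^sup>2 * (y - x)) \<le> 2 * ennreal (n\<^sup>2)"
    using rep[OF uv] unfolding N by blast
  show ?thesis
    apply (rule exI[of _ w])
    apply (intro conjI)
    subgoal by (rule wc)
    subgoal using ae unfolding ugd by simp
    subgoal using b1 conv by blast
    subgoal using b2 conv by blast
    subgoal using b3 conv by blast
    done
qed

lemma sup_bound:
  assumes ug: "ug \<in> H1V V"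
  shows "AE x in lborel. \<bar>fst ug x\<bar> \<le> sqrt (2 / min 1 v0) * H1V_norm V ug"
proof -
  obtain w where ae: "AE x in lborel. fst ug x = w x" and b: "\<And>x. min 1 v0 * (w x)\<^sup>2 \<le> 2 * (H1V_norm V ug)\<^sup>2"
    using rep2[OF ug] by blast
  have n0: "0 \<le> H1V_norm V ug" unfolding H1V_norm_def by simp
  have wb: "\<bar>w x\<bar> \<le> sqrt (2 / min 1 v0) * H1V_norm V ug" for x
    by (rule sq_to_abs[OF _ n0 b]) (use v0 in simp)
  show ?thesis using ae by eventually_elim (use wb in simp)
qed

lemma L2V_bound:
  assumes ug: "ug \<in> H1V V"
  shows "(\<integral>\<^sup>+x. ennreal (V x * (fst ug x)\<^sup>2) \<partial>lborel) \<le> ennreal ((H1V_norm V ug)\<^sup>2)"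
proof -
  obtain u g where ugd: "ug = (u, g)" by (cases ug)
  have "(\<integral>\<^sup>+x. ennreal (V x * (u x)\<^sup>2) \<partial>lborel) \<le> (\<integral>\<^sup>+x. ennreal ((g x)\<^sup>2 + V x * (u x)\<^sup>2) \<partial>lborel)"
    by (intro nn_integral_mono ennreal_leI) simp
  also have "\<dots> = ennreal ((H1V_norm V (u, g))\<^sup>2)" using norm_N ug ugd by simp
  finally show ?thesis using ugd by simp
qed


lemma seq_core:
  assumes coer: "\<And>M. \<exists>R. \<forall>t. R \<le> \<bar>t\<bar> \<longrightarrow> M \<le> V t"
    and sH: "\<And>n. s n \<in> H1V V" and sB: "\<And>n. H1V_norm V (s n) \<le> B"
  shows "\<exists>(r::nat \<Rightarrow> nat) w F. strict_mono r \<and> continuous_on UNIV w \<and> (\<forall>x. \<bar>w x\<bar> \<le> sqrt (2 / min 1 v0) * B) \<and>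
     (\<forall>n. continuous_on UNIV (F n)) \<and> (\<forall>n. AE x in lborel. fst (s n) x = F n x) \<and>
     (\<forall>\<epsilon>>0. \<exists>N. \<forall>k\<ge>N. \<forall>x. \<bar>F (r k) x - w x\<bar> < \<epsilon>)"
proof -
  define c where "c = min 1 v0"
  have cpos: "0 < c" using v0 unfolding c_def by simp
  have n0: "0 \<le> H1V_norm V (s n)" for n unfolding H1V_norm_def by simp
  have B0: "0 \<le> B" using n0[of 0] sB[of 0] by linarith
  have nB: "2 * (H1V_norm V (s n))\<^sup>2 \<le> 2 * B\<^sup>2" for n
    using n0[of n] sB[of n] by (simp add: power_mono)
  define Q where "Q n w \<longleftrightarrow> continuous_on UNIV w \<and> (AE x in lborel. fst (s n) x = w x) \<and>
     (\<forall>x. c * (w x)\<^sup>2 \<le> 2 * B\<^sup>2) \<and>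
     (\<forall>M x. 0 < M \<longrightarrow> (\<forall>t. \<bar>x\<bar> \<le> \<bar>t\<bar> \<longrightarrow> M \<le> V t) \<longrightarrow> sqrt M * (w x)\<^sup>2 \<le> 2 * B\<^sup>2) \<and>
     (\<forall>\<sigma> x y. 0 < \<sigma> \<longrightarrow> x \<le> y \<longrightarrow> \<sigma> * \<bar>w y - w x\<bar> - \<sigma>\<^sup>2 * (y - x) \<le> 2 * B\<^sup>2)" for n w
  have ex: "\<exists>w. Q n w" for n
  proof -
    from rep2[OF sH[of n]] obtain w where w1: "continuous_on UNIV w" and w2: "AE x in lborel. fst (s n) x = w x"
     and w3: "\<forall>x. c * (w x)\<^sup>2 \<le> 2 * (H1V_norm V (s n))\<^sup>2"
     and w4: "\<forall>M x. 0 < M \<longrightarrow> (\<forall>t. \<bar>x\<bar> \<le> \<bar>t\<bar> \<longrightarrow> M \<le> V t) \<longrightarrow> sqrt M * (w x)\<^sup>2 \<le> 2 * (H1V_norm V (s n))\<^sup>2"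
     and w5: "\<forall>\<sigma> x y. 0 < \<sigma> \<longrightarrow> x \<le> y \<longrightarrow> \<sigma> * \<bar>w y - w x\<bar> - \<sigma>\<^sup>2 * (y - x) \<le> 2 * (H1V_norm V (s n))\<^sup>2"
      unfolding c_def by blast
    have "Q n w" unfolding Q_def
    proof (intro conjI allI impI)
      show "continuous_on UNIV w" by (rule w1)
      show "AE x in lborel. fst (s n) x = w x" by (rule w2)
      show "c * (w x)\<^sup>2 \<le> 2 * B\<^sup>2" for x using w3 nB[of n] by (meson order_trans)
      show "sqrt M * (w x)\<^sup>2 \<le> 2 * B\<^sup>2" if "0 < M" "\<forall>t. \<bar>x\<bar> \<le> \<bar>t\<bar> \<longrightarrow> M \<le> V t" for M x
        using w4 that nB[of n] by (meson order_trans)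
      show "\<sigma> * \<bar>w y - w x\<bar> - \<sigma>\<^sup>2 * (y - x) \<le> 2 * B\<^sup>2" if "0 < \<sigma>" "x \<le> y" for \<sigma> x y
        using w5 that nB[of n] by (meson order_trans)
    qed
    then show ?thesis by blast
  qed
  define F where "F n = (SOME w. Q n w)" for n
  have QF: "Q n (F n)" for n unfolding F_def by (rule someI_ex[OF ex])
  have Fc: "\<And>n. continuous_on UNIV (F n)" using QF unfolding Q_def by blast
  have Fae: "\<And>n. AE x in lborel. fst (s n) x = F n x" using QF unfolding Q_def by blast
  have F1: "\<And>n x. c * (F n x)\<^sup>2 \<le> 2 * B\<^sup>2" using QF unfolding Q_def by blast
  have F2: "\<And>n M x. 0 < M \<Longrightarrow> (\<forall>t. \<bar>x\<bar> \<le> \<bar>t\<bar> \<longrightarrow> M \<le> V t) \<Longrightarrow> sqrt M * (F n x)\<^sup>2 \<le> 2 * B\<^sup>2"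
    using QF unfolding Q_def by blast
  have F3: "\<And>n \<sigma> x y. 0 < \<sigma> \<Longrightarrow> x \<le> y \<Longrightarrow> \<sigma> * \<bar>F n y - F n x\<bar> - \<sigma>\<^sup>2 * (y - x) \<le> 2 * B\<^sup>2"
    using QF unfolding Q_def by blast
  define B2 where "B2 = 2 * B\<^sup>2"
  have B20: "0 \<le> B2" unfolding B2_def by simp
  have bnd: "\<bar>F n x\<bar> \<le> sqrt (2 / c) * B" for n x
    by (rule sq_to_abs[OF cpos B0 F1])
  have equi1: "\<bar>F n y - F n x\<bar> < e" if e: "0 < e" and xy: "x \<le> y" "y - x < e / (2 * (B2 / e * 2 + 1))" for e n x y
  proof -
    define \<sigma> where "\<sigma> = B2 / e * 2 + 1"
    have \<sigma>0: "0 < \<sigma>" unfolding \<sigma>_def using B20 e by (simp add: add_nonneg_pos)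
    have h1: "B2 < \<sigma> * e / 2" unfolding \<sigma>_def using e by (simp add: field_simps)
    have "\<sigma>\<^sup>2 * (y - x) \<le> \<sigma>\<^sup>2 * (e / (2 * \<sigma>))" using xy \<sigma>0 unfolding \<sigma>_def by (intro mult_left_mono) auto
    also have "\<dots> = \<sigma> * e / 2" using \<sigma>0 by (simp add: power2_eq_square field_simps)
    finally have h2: "\<sigma>\<^sup>2 * (y - x) \<le> \<sigma> * e / 2" .
    have "\<sigma> * \<bar>F n y - F n x\<bar> \<le> B2 + \<sigma>\<^sup>2 * (y - x)" using F3[OF \<sigma>0 xy(1), of n] unfolding B2_def by linarith
    also have "\<dots> < \<sigma> * e" using h1 h2 by linarith
    finally show ?thesis using \<sigma>0 by simp
  qed
  have equi: "\<exists>d>0. \<forall>n x y. \<bar>x - y\<bar> < d \<longrightarrow> \<bar>F n x - F n y\<bar> < e" if e: "0 < e" for e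
  proof (intro exI[of _ "e / (2 * (B2 / e * 2 + 1))"] conjI allI impI)
    show "0 < e / (2 * (B2 / e * 2 + 1))" using e B20 by (simp add: add_nonneg_pos)
    fix n x y assume d: "\<bar>x - y\<bar> < e / (2 * (B2 / e * 2 + 1))"
    show "\<bar>F n x - F n y\<bar> < e"
    proof (cases "x \<le> y")
      case True
      then show ?thesis using equi1[OF e True, of n] d by (simp add: abs_minus_commute)
    next
      case False
      then show ?thesis using equi1[OF e, of y x n] d by (simp add: abs_minus_commute)
    qed
  qed
  have tail: "\<exists>R. \<forall>n x. R \<le> \<bar>x\<bar> \<longrightarrow> \<bar>F n x\<bar> \<le> \<epsilon>" if \<epsilon>: "0 < \<epsilon>" for \<epsilon>
  proof -
    define q where "q = B2 / \<epsilon>\<^sup>2 + 1"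
    have q0: "0 < q" unfolding q_def using B20 \<epsilon> by (simp add: add_nonneg_pos)
    obtain R where R: "\<And>t. R \<le> \<bar>t\<bar> \<Longrightarrow> q\<^sup>2 \<le> V t" using coer[of "q\<^sup>2"] by blast
    have "\<bar>F n x\<bar> \<le> \<epsilon>" if x: "R \<le> \<bar>x\<bar>" for n x
    proof -
      have "sqrt (q\<^sup>2) * (F n x)\<^sup>2 \<le> B2" unfolding B2_def
        by (rule F2) (use q0 x R in auto)
      then have "q * (F n x)\<^sup>2 \<le> B2" using q0 by simp
      also have "\<dots> < q * \<epsilon>\<^sup>2" unfolding q_def using \<epsilon> by (simp add: field_simps)
      finally have "(F n x)\<^sup>2 < \<epsilon>\<^sup>2" using q0 by simp
      then have "\<bar>F n x\<bar>\<^sup>2 < \<epsilon>\<^sup>2" by simp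
      then show ?thesis by (intro less_imp_le, rule power2_less_imp_less) (use \<epsilon> in auto)
    qed
    then show ?thesis by blast
  qed
  obtain r w where r: "strict_mono (r::nat \<Rightarrow> nat)" and wc: "continuous_on UNIV w"
    and wb: "\<forall>x. \<bar>w x\<bar> \<le> sqrt (2 / c) * B" and unif: "\<forall>\<epsilon>>0. \<exists>N. \<forall>k\<ge>N. \<forall>x. \<bar>F (r k) x - w x\<bar> < \<epsilon>"
    using compact_seq[of F "sqrt (2 / c) * B", OF bnd equi tail Fc] by blast
  show ?thesis
    apply (rule exI[of _ r], rule exI[of _ w], rule exI[of _ F])
    apply (intro conjI)
    subgoal by (rule r)
    subgoal by (rule wc)
    subgoal using wb unfolding c_def by blast
    subgoal using Fc by blast
    subgoal using Fae by blast
    subgoal by (rule unif)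
    done
qed


lemma H1V_meas:
  assumes "ug \<in> H1V V"
  shows "fst ug \<in> borel_measurable lborel"
  using assms unfolding H1V_def by (cases ug) auto

lemma Ltau_bound:
  assumes t: "2 < \<tau>" and ug: "ug \<in> H1V V"
  shows "LtauV_int V \<tau> (fst ug) \<le> ennreal ((max (sqrt (2 / min 1 v0)) 1 * H1V_norm V ug) powr \<tau>)"
proof -
  define K1 where "K1 = sqrt (2 / min 1 v0)"
  define n where "n = H1V_norm V ug"
  define p where "p = (K1 * n) powr (\<tau> - 2)"
  have K10: "0 \<le> K1" unfolding K1_def using v0 by simp
  have n0: "0 \<le> n" unfolding n_def H1V_norm_def by simp
  have p0: "0 \<le> p" unfolding p_def by simp
  have um[measurable]: "fst ug \<in> borel_measurable lborel" by (rule H1V_meas[OF ug])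
  note [measurable] = V_meas
  have ae: "AE x in lborel. \<bar>fst ug x\<bar> \<le> K1 * n" using sup_bound[OF ug] unfolding K1_def n_def .
  have "LtauV_int V \<tau> (fst ug) \<le> (\<integral>\<^sup>+x. ennreal p * ennreal (V x * (fst ug x)\<^sup>2) \<partial>lborel)"
    unfolding LtauV_int_def
  proof (rule nn_integral_mono_AE)
    show "AE x in lborel. ennreal (V x * \<bar>fst ug x\<bar> powr \<tau>) \<le> ennreal p * ennreal (V x * (fst ug x)\<^sup>2)"
      using ae
    proof eventually_elim
      case (elim x)
      have V0: "0 \<le> V x" using Vge[of x] v0 by simp
      have "V x * \<bar>fst ug x\<bar> powr \<tau> \<le> V x * ((fst ug x)\<^sup>2 * p)"
        unfolding p_def using V0 by (intro mult_left_mono abs_powr_split[OF t elim]) auto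
      then have "ennreal (V x * \<bar>fst ug x\<bar> powr \<tau>) \<le> ennreal (p * (V x * (fst ug x)\<^sup>2))"
        by (intro ennreal_leI) (simp add: algebra_simps)
      also have "\<dots> = ennreal p * ennreal (V x * (fst ug x)\<^sup>2)" using p0 V0 by (intro ennreal_mult) auto
      finally show ?case .
    qed
  qed
  also have "\<dots> = ennreal p * (\<integral>\<^sup>+x. ennreal (V x * (fst ug x)\<^sup>2) \<partial>lborel)"
    by (rule nn_integral_cmult) measurable
  also have "\<dots> \<le> ennreal p * ennreal (n\<^sup>2)"
    using L2V_bound[OF ug] unfolding n_def by (rule mult_left_mono) simp
  also have "\<dots> = ennreal (p * n\<^sup>2)" using p0 by (simp add: ennreal_mult)
  also have "\<dots> \<le> ennreal ((max K1 1 * n) powr \<tau>)"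
    unfolding p_def using K10 n0 t by (intro ennreal_leI powr_est) auto
  finally show ?thesis unfolding K1_def n_def .
qed


lemma Ltau_seq:
  assumes t: "2 < \<tau>" and coer: "\<And>M. \<exists>R. \<forall>t. R \<le> \<bar>t\<bar> \<longrightarrow> M \<le> V t"
    and sH: "\<And>n. s n \<in> H1V V" and sB: "\<And>n. H1V_norm V (s n) \<le> B"
  shows "\<exists>(r::nat \<Rightarrow> nat) w. strict_mono r \<and> w \<in> borel_measurable lborel \<and> LtauV_int V \<tau> w < \<infinity> \<and>
           (\<lambda>k. LtauV_int V \<tau> (\<lambda>x. fst (s (r k)) x - w x)) \<longlonglongrightarrow> 0"
proof -
  obtain r w F where r: "strict_mono (r::nat \<Rightarrow> nat)" and wc: "continuous_on UNIV w"
    and wb: "\<forall>x. \<bar>w x\<bar> \<le> sqrt (2 / min 1 v0) * B" and Fc: "\<forall>n. continuous_on UNIV (F n)"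
    and Fae: "\<forall>n. AE x in lborel. fst (s n) x = F n x"
    and unif: "\<forall>\<epsilon>>0. \<exists>N. \<forall>k\<ge>N. \<forall>x. \<bar>F (r k) x - w x\<bar> < \<epsilon>"
    using seq_core[where s=s and B=B, OF coer sH sB] by blast
  define M0 where "M0 = sqrt (2 / min 1 v0) * B"
  have n0: "0 \<le> H1V_norm V (s n)" for n unfolding H1V_norm_def by simp
  have B0: "0 \<le> B" using n0[of 0] sB[of 0] by linarith
  have wm[measurable]: "w \<in> borel_measurable lborel" using wc by (simp add: borel_measurable_continuous_onI)
  have Fm[measurable]: "F n \<in> borel_measurable lborel" for n using Fc by (simp add: borel_measurable_continuous_onI)
  note [measurable] = V_meas
  have V0: "0 \<le> V x" for x using Vge[of x] v0 by simp
  have FB: "(\<integral>\<^sup>+x. ennreal (V x * (F n x)\<^sup>2) \<partial>lborel) \<le> ennreal (B\<^sup>2)" for n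
  proof -
    have "(\<integral>\<^sup>+x. ennreal (V x * (F n x)\<^sup>2) \<partial>lborel) = (\<integral>\<^sup>+x. ennreal (V x * (fst (s n) x)\<^sup>2) \<partial>lborel)"
      using Fae[rule_format, of n] by (intro nn_integral_cong_AE) (erule AE_mp, simp)
    also have "\<dots> \<le> ennreal ((H1V_norm V (s n))\<^sup>2)" by (rule L2V_bound[OF sH])
    also have "\<dots> \<le> ennreal (B\<^sup>2)" using n0[of n] sB[of n] by (intro ennreal_leI power_mono) auto
    finally show ?thesis .
  qed
  have pt: "(\<lambda>k. F (r k) x) \<longlonglongrightarrow> w x" for x
  proof (rule LIMSEQ_I)
    fix e :: real assume "0 < e"
    then obtain N where "\<forall>k\<ge>N. \<forall>x. \<bar>F (r k) x - w x\<bar> < e" using unif by blast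
    then show "\<exists>no. \<forall>k\<ge>no. norm (F (r k) x - w x) < e" by auto
  qed
  have wB: "(\<integral>\<^sup>+x. ennreal (V x * (w x)\<^sup>2) \<partial>lborel) \<le> ennreal (B\<^sup>2)"
  proof -
    have "(\<integral>\<^sup>+x. ennreal (V x * (w x)\<^sup>2) \<partial>lborel)
        = (\<integral>\<^sup>+x. liminf (\<lambda>k. ennreal (V x * (F (r k) x)\<^sup>2)) \<partial>lborel)"
    proof (rule nn_integral_cong)
      fix x
      have "(\<lambda>k. ennreal (V x * (F (r k) x)\<^sup>2)) \<longlonglongrightarrow> ennreal (V x * (w x)\<^sup>2)"
        by (intro tendsto_intros pt)
      then show "ennreal (V x * (w x)\<^sup>2) = liminf (\<lambda>k. ennreal (V x * (F (r k) x)\<^sup>2))"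
        by (simp add: lim_imp_Liminf)
    qed
    also have "\<dots> \<le> liminf (\<lambda>k. (\<integral>\<^sup>+x. ennreal (V x * (F (r k) x)\<^sup>2) \<partial>lborel))"
      by (intro nn_integral_liminf) measurable
    also have "\<dots> \<le> liminf (\<lambda>k. ennreal (B\<^sup>2))"
      by (intro Liminf_mono always_eventually allI FB)
    also have "\<dots> = ennreal (B\<^sup>2)" by (rule Liminf_const) simp
    finally show ?thesis .
  qed
  have wM: "\<bar>w x\<bar> \<le> M0" for x using wb unfolding M0_def by blast
  have M00: "0 \<le> M0" using wM[of 0] by linarith
  have fin: "LtauV_int V \<tau> w < \<infinity>"
  proof -
    have "LtauV_int V \<tau> w \<le> (\<integral>\<^sup>+x. ennreal (M0 powr (\<tau> - 2)) * ennreal (V x * (w x)\<^sup>2) \<partial>lborel)"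
      unfolding LtauV_int_def
    proof (rule nn_integral_mono)
      fix x
      have "V x * \<bar>w x\<bar> powr \<tau> \<le> V x * ((w x)\<^sup>2 * M0 powr (\<tau> - 2))"
        using V0[of x] by (intro mult_left_mono abs_powr_split[OF t wM]) auto
      then have "ennreal (V x * \<bar>w x\<bar> powr \<tau>) \<le> ennreal (M0 powr (\<tau> - 2) * (V x * (w x)\<^sup>2))"
        by (intro ennreal_leI) (simp add: algebra_simps)
      also have "\<dots> = ennreal (M0 powr (\<tau> - 2)) * ennreal (V x * (w x)\<^sup>2)"
        using V0[of x] by (intro ennreal_mult) auto
      finally show "ennreal (V x * \<bar>w x\<bar> powr \<tau>) \<le> ennreal (M0 powr (\<tau> - 2)) * ennreal (V x * (w x)\<^sup>2)" .
    qed
    also have "\<dots> = ennreal (M0 powr (\<tau> - 2)) * (\<integral>\<^sup>+x. ennreal (V x * (w x)\<^sup>2) \<partial>lborel)"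
      by (rule nn_integral_cmult) measurable
    also have "\<dots> \<le> ennreal (M0 powr (\<tau> - 2)) * ennreal (B\<^sup>2)"
      using wB by (rule mult_left_mono) simp
    also have "\<dots> < \<infinity>" by (simp add: ennreal_mult_less_top)
    finally show ?thesis .
  qed
  have conv: "(\<lambda>k. LtauV_int V \<tau> (\<lambda>x. fst (s (r k)) x - w x)) \<longlonglongrightarrow> 0"
  proof (rule tendsto_ennreal_0I)
    fix \<delta> :: real assume \<delta>: "0 < \<delta>"
    define q where "q = \<delta> / (4 * B\<^sup>2 + 1)"
    have q0: "0 < q" unfolding q_def using \<delta> by (simp add: add_nonneg_pos)
    define \<epsilon> where "\<epsilon> = q powr (1 / (\<tau> - 2))"
    have \<epsilon>0: "0 < \<epsilon>" unfolding \<epsilon>_def using q0 by simp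
    have \<epsilon>q: "\<epsilon> powr (\<tau> - 2) = q" unfolding \<epsilon>_def using q0 t by (simp add: powr_powr)
    obtain N where N: "\<forall>k\<ge>N. \<forall>x. \<bar>F (r k) x - w x\<bar> < \<epsilon>" using unif \<epsilon>0 by blast
    have "LtauV_int V \<tau> (\<lambda>x. fst (s (r k)) x - w x) \<le> ennreal \<delta>" if k: "N \<le> k" for k
    proof -
      have "LtauV_int V \<tau> (\<lambda>x. fst (s (r k)) x - w x)
          \<le> (\<integral>\<^sup>+x. ennreal q * ennreal (V x * (F (r k) x - w x)\<^sup>2) \<partial>lborel)"
        unfolding LtauV_int_def
      proof (rule nn_integral_mono_AE)
        show "AE x in lborel. ennreal (V x * \<bar>fst (s (r k)) x - w x\<bar> powr \<tau>) \<le> ennreal q * ennreal (V x * (F (r k) x - w x)\<^sup>2)"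
          using Fae[rule_format, of "r k"]
        proof eventually_elim
          case (elim x)
          have le: "\<bar>F (r k) x - w x\<bar> \<le> \<epsilon>" using N k by (meson less_imp_le)
          have "V x * \<bar>F (r k) x - w x\<bar> powr \<tau> \<le> V x * ((F (r k) x - w x)\<^sup>2 * \<epsilon> powr (\<tau> - 2))"
            using V0[of x] by (intro mult_left_mono abs_powr_split[OF t le]) auto
          then have "ennreal (V x * \<bar>F (r k) x - w x\<bar> powr \<tau>) \<le> ennreal (q * (V x * (F (r k) x - w x)\<^sup>2))"
            unfolding \<epsilon>q by (intro ennreal_leI) (simp add: algebra_simps)
          also have "\<dots> = ennreal q * ennreal (V x * (F (r k) x - w x)\<^sup>2)"
            using V0[of x] q0 by (intro ennreal_mult) auto
          finally show ?case using elim by simp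
        qed
      qed
      also have "\<dots> = ennreal q * (\<integral>\<^sup>+x. ennreal (V x * (F (r k) x - w x)\<^sup>2) \<partial>lborel)"
        by (rule nn_integral_cmult) measurable
      also have "\<dots> \<le> ennreal q * (2 * ennreal (B\<^sup>2) + 2 * ennreal (B\<^sup>2))"
      proof (rule mult_left_mono)
        have "(\<integral>\<^sup>+x. ennreal (V x * (F (r k) x - w x)\<^sup>2) \<partial>lborel)
            \<le> 2 * (\<integral>\<^sup>+x. ennreal (V x * (F (r k) x)\<^sup>2) \<partial>lborel) + 2 * (\<integral>\<^sup>+x. ennreal (V x * (w x)\<^sup>2) \<partial>lborel)"
        proof (rule nn_2sum)
          show "(\<lambda>x. V x * (F (r k) x)\<^sup>2) \<in> borel_measurable lborel" by measurable
          show "(\<lambda>x. V x * (w x)\<^sup>2) \<in> borel_measurable lborel" by measurable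
          show "0 \<le> V x * (F (r k) x)\<^sup>2" for x using V0[of x] by simp
          show "0 \<le> V x * (w x)\<^sup>2" for x using V0[of x] by simp
          fix x
          have "V x * (F (r k) x - w x)\<^sup>2 \<le> V x * (2 * (F (r k) x - 0)\<^sup>2 + 2 * (w x - 0)\<^sup>2)"
            using V0[of x] by (intro mult_left_mono sq_ineq) auto
          then show "V x * (F (r k) x - w x)\<^sup>2 \<le> 2 * (V x * (F (r k) x)\<^sup>2) + 2 * (V x * (w x)\<^sup>2)"
            by (simp add: algebra_simps)
        qed
        also have "\<dots> \<le> 2 * ennreal (B\<^sup>2) + 2 * ennreal (B\<^sup>2)"
          using FB[of "r k"] wB by (intro add_mono mult_left_mono) auto
        finally show "(\<integral>\<^sup>+x. ennreal (V x * (F (r k) x - w x)\<^sup>2) \<partial>lborel) \<le> 2 * ennreal (B\<^sup>2) + 2 * ennreal (B\<^sup>2)" .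
      qed simp
      also have "\<dots> = ennreal (q * (4 * B\<^sup>2))"
      proof -
        have "(2::ennreal) * ennreal (B\<^sup>2) + 2 * ennreal (B\<^sup>2) = (2 + 2) * ennreal (B\<^sup>2)"
          by (rule distrib_right[symmetric])
        also have "(2 + 2 :: ennreal) = ennreal 4" by simp
        also have "ennreal 4 * ennreal (B\<^sup>2) = ennreal (4 * B\<^sup>2)" by (rule ennreal_mult[symmetric]) auto
        finally have "(2::ennreal) * ennreal (B\<^sup>2) + 2 * ennreal (B\<^sup>2) = ennreal (4 * B\<^sup>2)" .
        moreover have "ennreal q * ennreal (4 * B\<^sup>2) = ennreal (q * (4 * B\<^sup>2))" using q0 by (intro ennreal_mult[symmetric]) auto
        ultimately show ?thesis by simp
      qed
      also have "\<dots> \<le> ennreal \<delta>"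
      proof (rule ennreal_leI)
        have "q * (4 * B\<^sup>2) = \<delta> * (4 * B\<^sup>2 / (4 * B\<^sup>2 + 1))" unfolding q_def by (simp add: field_simps)
        also have "\<dots> \<le> \<delta> * 1"
        proof (rule mult_left_mono)
          have "0 < 4 * B\<^sup>2 + 1" by (simp add: add_nonneg_pos)
          then show "4 * B\<^sup>2 / (4 * B\<^sup>2 + 1) \<le> 1" by (simp add: divide_le_eq)
        qed (use \<delta> in simp)
        finally show "q * (4 * B\<^sup>2) \<le> \<delta>" by simp
      qed
      finally show ?thesis .
    qed
    then show "\<exists>N. \<forall>k\<ge>N. LtauV_int V \<tau> (\<lambda>x. fst (s (r k)) x - w x) \<le> ennreal \<delta>" by blast
  qed
  show ?thesis using r wm fin conv by blast
qed


end

theorem theorem2p11: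
  fixes V W :: "real \<Rightarrow> real" and C :: real
  assumes "continuous_on UNIV V"
    and "bdd_below (range V)" and "(INF x. V x) > 0"
    and "filterlim V at_top at_infinity"
    and "\<And>a b. set_integrable lborel {a..b} W"
    and "\<And>\<phi>. test_fun \<phi> \<Longrightarrow>
           (\<integral>x. V x * deriv \<phi> x \<partial>lborel) = - (\<integral>x. W x * \<phi> x \<partial>lborel)"
    and "C > 0"
    and "AE x in lborel. \<bar>W x\<bar> \<le> C * V x powr (3/2)"
  shows "compact_embed_Linf V \<and> (\<forall>\<tau>>2. compact_embed_LtauV V \<tau>)"
proof -
  define v0 where "v0 = (INF x. V x)"
  have Vge: "\<And>x. v0 \<le> V x" unfolding v0_def using assms(2) by (simp add: cINF_lower)
  have v0pos: "0 < v0" using assms(3) unfolding v0_def .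
  interpret Vctx V v0 using assms(1) Vge v0pos by unfold_locales auto
  have coer: "\<exists>R. \<forall>t. R \<le> \<bar>t\<bar> \<longrightarrow> M \<le> V t" for M
  proof -
    have "eventually (\<lambda>x. M \<le> V x) at_infinity" using assms(4) unfolding filterlim_at_top by blast
    then show ?thesis unfolding eventually_at_infinity by (auto simp: real_norm_def)
  qed
  define K1 where "K1 = sqrt (2 / min 1 v0)"
  have K10: "0 \<le> K1" unfolding K1_def using v0pos by simp
  have inj: "H1V_injective V" by (rule H1V_inj)
  have Linf: "compact_embed_Linf V"
    unfolding compact_embed_Linf_def
  proof (intro conjI allI impI)
    show "H1V_injective V" by (rule inj)
    show "\<exists>C\<ge>0. \<forall>ug\<in>H1V V. AE x in lborel. \<bar>fst ug x\<bar> \<le> C * H1V_norm V ug"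
      using sup_bound K10 unfolding K1_def by blast
    fix s :: "nat \<Rightarrow> (real \<Rightarrow> real) \<times> (real \<Rightarrow> real)" and B :: real
    assume sB: "\<forall>n. s n \<in> H1V V \<and> H1V_norm V (s n) \<le> B"
    obtain r w F where r: "strict_mono (r::nat \<Rightarrow> nat)" and wc: "continuous_on UNIV w"
      and wb: "\<forall>x. \<bar>w x\<bar> \<le> sqrt (2 / min 1 v0) * B"
      and Fae: "\<forall>n. AE x in lborel. fst (s n) x = F n x"
      and unif: "\<forall>\<epsilon>>0. \<exists>N. \<forall>k\<ge>N. \<forall>x. \<bar>F (r k) x - w x\<bar> < \<epsilon>"
      using seq_core[where s=s and B=B, OF coer] sB by blast
    have wm: "w \<in> borel_measurable lborel" using wc by (simp add: borel_measurable_continuous_onI)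
    have wM: "\<exists>M. AE x in lborel. \<bar>w x\<bar> \<le> M" using wb by blast
    have conv: "\<exists>N. \<forall>k\<ge>N. AE x in lborel. \<bar>fst (s (r k)) x - w x\<bar> \<le> \<epsilon>" if e: "0 < \<epsilon>" for \<epsilon>
    proof -
      obtain N where N: "\<forall>k\<ge>N. \<forall>x. \<bar>F (r k) x - w x\<bar> < \<epsilon>" using unif e by blast
      have "AE x in lborel. \<bar>fst (s (r k)) x - w x\<bar> \<le> \<epsilon>" if k: "N \<le> k" for k
        using Fae[rule_format, of "r k"]
      proof eventually_elim
        case (elim x)
        then show ?case using N k by (metis less_imp_le)
      qed
      then show ?thesis by blast
    qed
    show "\<exists>(r::nat \<Rightarrow> nat) w. strict_mono r \<and> w \<in> borel_measurable lborel \<and>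
           (\<exists>M. AE x in lborel. \<bar>w x\<bar> \<le> M) \<and>
           (\<forall>\<epsilon>::real>0. \<exists>N. \<forall>k\<ge>N. AE x in lborel. \<bar>fst (s (r k)) x - w x\<bar> \<le> \<epsilon>)"
      using r wm wM conv by blast
  qed
  have Lt: "compact_embed_LtauV V \<tau>" if t: "2 < \<tau>" for \<tau>
    unfolding compact_embed_LtauV_def
  proof (intro conjI allI impI)
    show "H1V_injective V" by (rule inj)
    show "\<exists>C\<ge>0. \<forall>ug\<in>H1V V. LtauV_int V \<tau> (fst ug) \<le> ennreal ((C * H1V_norm V ug) powr \<tau>)"
      using Ltau_bound[OF t] by (intro exI[of _ "max (sqrt (2 / min 1 v0)) 1"]) auto
    fix s :: "nat \<Rightarrow> (real \<Rightarrow> real) \<times> (real \<Rightarrow> real)" and B :: real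
    assume sB: "\<forall>n. s n \<in> H1V V \<and> H1V_norm V (s n) \<le> B"
    show "\<exists>(r::nat \<Rightarrow> nat) w. strict_mono r \<and> w \<in> borel_measurable lborel \<and>
           LtauV_int V \<tau> w < \<infinity> \<and>
           (\<lambda>k. LtauV_int V \<tau> (\<lambda>x. fst (s (r k)) x - w x)) \<longlonglongrightarrow> 0"
      using Ltau_seq[where s=s and B=B, OF t coer] sB by blast
  qed
  show ?thesis using Linf Lt by blast
qed

end
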